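(* Let $\alpha>1$, $\lambda\in[0,\infty)^d$, $i\in[d]$, and suppose $\lambda_i$ is the $\sigma_i$-th smallest among $\lambda_1,\dots,\lambda_d$ (ties broken arbitrarily). Then $$\frac{J_i(\lambda;\mathcal{F}_\alpha)}{\phi_i(\lambda;\mathcal{F}_\alpha)}\le\left(\frac{(\sigma_i\wedge m)+\frac1\alpha}{(\sigma_i-m+1)\vee1}\right)^{\frac1\alpha}\quad\text{and}\quad\frac{J_i(\lambda;\mathcal{P}_\alpha)}{\phi_i(\lambda;\mathcal{P}_\alpha)}\le\frac{2\alpha}{\alpha+1}\left(\frac{(\sigma_i\wedge m)+\frac1\alpha}{\sigma_i}\right)^{\frac1\alpha}.$$
   Context: Integers $1\le m\le d$; $a\wedge b=\min$, $a\vee b=\max$. Fréchet $\mathcal{F}_\alpha$: CDF $F(x)=e^{-1/x^\alpha}$, density $f(x)=\alpha x^{-(\alpha+1)}e^{-1/x^\alpha}$, $x\ge0$, left endpoint $\nu=0$; Pareto $\mathcal{P}_\alpha$: $F(x)=1-x^{-\alpha}$, $f(x)=\alpha x^{-(\alpha+1)}$, $x\ge1$, $\nu=1$. For $\mathcal{D}\in\{\mathcal{F}_\alpha,\mathcal{P}_\alpha\}$ and $\lambda\in[0,\infty)^d$, let $r$ have i.i.d. coordinates from $\mathcal{D}$; $\phi_i(\lambda;\mathcal{D})$ is the probability that $r_i-\lambda_i$ is among the $m$ largest of $\{r_j-\lambda_j:j\in[d]\}$, i.e. $$\phi_i(\lambda;\mathcal{D})=\sum_{\theta=1}^m\int_{\nu-\lambda_i}^\infty\sum_{S\subseteq[d]\setminus\{i\},|S|=\theta-1}\prod_{j\in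 S}(1-F(z+\lambda_j))\prod_{j\notin S\cup\{i\}}F(z+\lambda_j)\,f(z+\lambda_i)\,dz,$$ and $J_i(\lambda;\mathcal{D})$ is the same expression with the extra factor $\frac1{z+\lambda_i}$ in the integrand (equivalently $J_i(\lambda;\mathcal{D})=\mathbb{E}[\mathbf 1\{r_i-\lambda_i \text{ among the } m \text{ largest}\}/r_i]$). *)

theory Defs
  imports "HOL-Analysis.Analysis"
begin

text \<open>Coordinates are indexed by {..<d} (i.e. 0,...,d-1) instead of 1,...,d.
  CDFs and densities are extended to all of the real line (0 below the support).\<close>

definition frechet_cdf :: "real \<Rightarrow> real \<Rightarrow> real" where
  "frechet_cdf \<alpha> x = (if x > 0 then exp (- (x powr (-\<alpha>))) else 0)"

definition frechet_pdf :: "real \<Rightarrow> real \<Rightarrow> real" where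
  "frechet_pdf \<alpha> x = (if x > 0 then \<alpha> * x powr (-(\<alpha> + 1)) * exp (- (x powr (-\<alpha>))) else 0)"

definition pareto_cdf :: "real \<Rightarrow> real \<Rightarrow> real" where
  "pareto_cdf \<alpha> x = (if x \<ge> 1 then 1 - x powr (-\<alpha>) else 0)"

definition pareto_pdf :: "real \<Rightarrow> real \<Rightarrow> real" where
  "pareto_pdf \<alpha> x = (if x \<ge> 1 then \<alpha> * x powr (-(\<alpha> + 1)) else 0)"

text \<open>Integrand of phi_i (without the density/extra factor): probability that
  exactly theta-1 of the other coordinates exceed level z, summed over theta = 1..m.\<close>
definition topm_weight ::
  "(real \<Rightarrow> real) \<Rightarrow> nat \<Rightarrow> nat \<Rightarrow> (nat \<Rightarrow> real) \<Rightarrow> nat \<Rightarrow> real \<Rightarrow> real" where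
  "topm_weight F d m lam i z =
     (\<Sum>\<theta>\<in>{1..m}. \<Sum>S\<in>{S. S \<subseteq> {..<d} - {i} \<and> card S = \<theta> - 1}.
        (\<Prod>j\<in>S. 1 - F (z + lam j)) * (\<Prod>j\<in>{..<d} - S - {i}. F (z + lam j)))"

definition phi_gen ::
  "(real \<Rightarrow> real) \<Rightarrow> (real \<Rightarrow> real) \<Rightarrow> real \<Rightarrow> nat \<Rightarrow> nat \<Rightarrow> (nat \<Rightarrow> real) \<Rightarrow> nat \<Rightarrow> real" where
  "phi_gen F f \<nu> d m lam i =
     (LINT z:{\<nu> - lam i..}|lborel. topm_weight F d m lam i z * f (z + lam i))"

definition J_gen ::
  "(real \<Rightarrow> real) \<Rightarrow> (real \<Rightarrow> real) \<Rightarrow> real \<Rightarrow> nat \<Rightarrow> nat \<Rightarrow> (nat \<Rightarrow> real) \<Rightarrow> nat \<Rightarrow> real" where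
  "J_gen F f \<nu> d m lam i =
     (LINT z:{\<nu> - lam i..}|lborel. topm_weight F d m lam i z * f (z + lam i) / (z + lam i))"

definition phi_frechet :: "real \<Rightarrow> nat \<Rightarrow> nat \<Rightarrow> (nat \<Rightarrow> real) \<Rightarrow> nat \<Rightarrow> real" where
  "phi_frechet \<alpha> = phi_gen (frechet_cdf \<alpha>) (frechet_pdf \<alpha>) 0"

definition J_frechet :: "real \<Rightarrow> nat \<Rightarrow> nat \<Rightarrow> (nat \<Rightarrow> real) \<Rightarrow> nat \<Rightarrow> real" where
  "J_frechet \<alpha> = J_gen (frechet_cdf \<alpha>) (frechet_pdf \<alpha>) 0"

definition phi_pareto :: "real \<Rightarrow> nat \<Rightarrow> nat \<Rightarrow> (nat \<Rightarrow> real) \<Rightarrow> nat \<Rightarrow> real" where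
  "phi_pareto \<alpha> = phi_gen (pareto_cdf \<alpha>) (pareto_pdf \<alpha>) 1"

definition J_pareto :: "real \<Rightarrow> nat \<Rightarrow> nat \<Rightarrow> (nat \<Rightarrow> real) \<Rightarrow> nat \<Rightarrow> real" where
  "J_pareto \<alpha> = J_gen (pareto_cdf \<alpha>) (pareto_pdf \<alpha>) 1"

end

theory Submission
  imports Defs
begin

definition PB :: "'a set \<Rightarrow> ('a \<Rightarrow> real) \<Rightarrow> nat \<Rightarrow> real" where
  "PB A s k = (\<Sum>S\<in>{S. S \<subseteq> A \<and> card S < k}. (\<Prod>j\<in>S. 1 - s j) * (\<Prod>j\<in>A - S. s j))"

lemma PB_0[simp]: "PB A s 0 = 0"
  by (simp add: PB_def)

lemma PB_empty: "k \<ge> 1 \<Longrightarrow> PB {} s k = 1"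
proof -
  assume "k \<ge> 1"
  then have "{S. S \<subseteq> ({}::'a set) \<and> card S < k} = {{}}" by auto
  then show ?thesis by (simp add: PB_def)
qed

lemma PB_insert:
  assumes fin: "finite A" and a: "a \<notin> A" and k: "k \<ge> 1"
  shows "PB (insert a A) s k = s a * PB A s k + (1 - s a) * PB A s (k - 1)"
proof -
  let ?t = "\<lambda>B S. (\<Prod>j\<in>S. 1 - s j) * (\<Prod>j\<in>B - S. s j)"
  define X where "X = {S. S \<subseteq> A \<and> card S < k}"
  define Y where "Y = {S. S \<subseteq> A \<and> card S < k - 1}"
  have split: "{S. S \<subseteq> insert a A \<and> card S < k} = X \<union> insert a ` Y"
  proof (rule set_eqI, rule iffI)
    fix S assume "S \<in> {S. S \<subseteq> insert a A \<and> card S < k}"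
    then have S: "S \<subseteq> insert a A" "card S < k" by auto
    show "S \<in> X \<union> insert a ` Y"
    proof (cases "a \<in> S")
      case True
      have fS: "finite (S - {a})" using S fin finite_subset by blast
      have "S = insert a (S - {a})" using True by auto
      moreover have "card (S - {a}) < k - 1"
        using S True fS by (simp add: card_Diff_singleton) (metis Suc_pred card_gt_0_iff empty_iff Suc_leI le_less_trans less_imp_le_nat less_le_trans linorder_not_less not_less_eq_eq)
      moreover have "S - {a} \<subseteq> A" using S by auto
      ultimately show ?thesis unfolding Y_def by blast
    next
      case False
      then show ?thesis using S unfolding X_def by auto
    qed
  next
    fix S assume "S \<in> X \<union> insert a ` Y"
    then show "S \<in> {S. S \<subseteq> insert a A \<and> card S < k}"
    proof
      assume "S \<in> X" then show ?thesis unfolding X_def by auto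
    next
      assume "S \<in> insert a ` Y"
      then obtain S' where S': "S = insert a S'" "S' \<subseteq> A" "card S' < k - 1" unfolding Y_def by auto
      have "finite S'" using S' fin finite_subset by blast
      moreover have "a \<notin> S'" using S' a by auto
      ultimately have "card S = card S' + 1" using S' by simp
      then show ?thesis using S' by auto
    qed
  qed
  have disj: "X \<inter> insert a ` Y = {}" unfolding X_def Y_def using a by auto
  have finX: "finite X" unfolding X_def using fin by simp
  have finY: "finite Y" unfolding Y_def using fin by simp
  have inj: "inj_on (insert a) Y" unfolding Y_def inj_on_def using a by (metis (mono_tags) Diff_insert_absorb mem_Collect_eq subsetD)
  have "PB (insert a A) s k = sum (?t (insert a A)) X + sum (?t (insert a A)) (insert a ` Y)"
    unfolding PB_def split using disj finX finY by (simp add: sum.union_disjoint)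
  also have "sum (?t (insert a A)) X = s a * PB A s k"
  proof -
    have "?t (insert a A) S = s a * ?t A S" if "S \<in> X" for S
    proof -
      have "insert a A - S = insert a (A - S)" using that a unfolding X_def by auto
      moreover have "finite (A - S)" using fin by simp
      moreover have "a \<notin> A - S" using a by simp
      ultimately show ?thesis by simp
    qed
    then have "sum (?t (insert a A)) X = sum (\<lambda>S. s a * ?t A S) X" by (rule sum.cong[OF refl])
    then show ?thesis unfolding PB_def X_def[symmetric] by (simp add: sum_distrib_left)
  qed
  also have "sum (?t (insert a A)) (insert a ` Y) = (1 - s a) * PB A s (k - 1)"
  proof -
    have "sum (?t (insert a A)) (insert a ` Y) = sum (?t (insert a A) \<circ> insert a) Y"
      using inj by (simp add: sum.reindex)
    also have "\<dots> = sum (\<lambda>S. (1 - s a) * ?t A S) Y"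
    proof (rule sum.cong)
      fix S assume "S \<in> Y"
      then have S: "S \<subseteq> A" unfolding Y_def by auto
      have fS: "finite S" using S fin finite_subset by blast
      have "insert a A - insert a S = A - S" using a S by auto
      moreover have "(\<Prod>j\<in>insert a S. 1 - s j) = (1 - s a) * (\<Prod>j\<in>S. 1 - s j)"
        using fS a S by (subst prod.insert) auto
      ultimately show "(?t (insert a A) \<circ> insert a) S = (1 - s a) * ?t A S" by simp
    qed simp
    finally show ?thesis unfolding PB_def Y_def[symmetric] by (simp add: sum_distrib_left)
  qed
  finally show ?thesis .
qed

lemma PB_bounds:
  assumes "finite A" "\<forall>j\<in>A. 0 \<le> s j \<and> s j \<le> 1"
  shows "0 \<le> PB A s k \<and> PB A s k \<le> 1"
  using assms
proof (induction A arbitrary: k rule: finite_induct)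
  case empty
  then show ?case by (cases k) (auto simp: PB_empty)
next
  case (insert a A)
  show ?case
  proof (cases k)
    case 0 then show ?thesis by simp
  next
    case (Suc k')
    have X: "0 \<le> PB A s k \<and> PB A s k \<le> 1" and Y: "0 \<le> PB A s (k-1) \<and> PB A s (k-1) \<le> 1"
      using insert by auto
    have sa: "0 \<le> s a" "s a \<le> 1" using insert by auto
    have eq: "PB (insert a A) s k = s a * PB A s k + (1 - s a) * PB A s (k - 1)"
      using insert Suc by (intro PB_insert) auto
    have "s a * PB A s k + (1 - s a) * PB A s (k - 1) \<le> s a * 1 + (1 - s a) * 1"
      using X Y sa by (intro add_mono mult_left_mono) auto
    moreover have "0 \<le> s a * PB A s k + (1 - s a) * PB A s (k - 1)"
      using X Y sa by simp
    ultimately show ?thesis using eq by simp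
  qed
qed

lemma PB_mono_k:
  assumes "finite A" "\<forall>j\<in>A. 0 \<le> s j \<and> s j \<le> 1" "k \<le> k'"
  shows "PB A s k \<le> PB A s k'"
  unfolding PB_def
proof (rule sum_mono2)
  show "finite {S. S \<subseteq> A \<and> card S < k'}" using assms by simp
  show "{S. S \<subseteq> A \<and> card S < k} \<subseteq> {S. S \<subseteq> A \<and> card S < k'}" using assms by auto
  fix S assume "S \<in> {S. S \<subseteq> A \<and> card S < k'} - {S. S \<subseteq> A \<and> card S < k}"
  then have "S \<subseteq> A" by auto
  then show "0 \<le> (\<Prod>j\<in>S. 1 - s j) * (\<Prod>j\<in>A - S. s j)"
    using assms by (intro mult_nonneg_nonneg prod_nonneg) auto
qed

lemma topm_eq:
  assumes "1 \<le> m"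
  shows "topm_weight F d m lam i z = PB ({..<d} - {i}) (\<lambda>j. F (z + lam j)) m"
proof -
  define A where "A = {..<d} - {i}"
  define t where "t = (\<lambda>S. (\<Prod>j\<in>S. 1 - F (z + lam j)) * (\<Prod>j\<in>A - S. F (z + lam j)))"
  define B where "B = (\<lambda>\<theta>::nat. {S. S \<subseteq> A \<and> card S = \<theta> - 1})"
  have finA: "finite A" unfolding A_def by simp
  have "topm_weight F d m lam i z = (\<Sum>\<theta>\<in>{1..m}. sum t (B \<theta>))"
    unfolding topm_weight_def t_def B_def A_def by (intro sum.cong refl) (auto intro!: prod.cong)
  also have "\<dots> = sum t (\<Union>(B ` {1..m}))"
    by (rule sum.UNION_disjoint[symmetric]) (use finA in \<open>auto simp: B_def\<close>)
  also have "\<Union>(B ` {1..m}) = {S. S \<subseteq> A \<and> card S < m}"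
  proof (rule set_eqI, rule iffI)
    fix S assume "S \<in> \<Union>(B ` {1..m})"
    then show "S \<in> {S. S \<subseteq> A \<and> card S < m}" unfolding B_def by auto
  next
    fix S assume S: "S \<in> {S. S \<subseteq> A \<and> card S < m}"
    then have "card S + 1 \<in> {1..m}" "S \<in> B (card S + 1)" unfolding B_def by auto
    then show "S \<in> \<Union>(B ` {1..m})" by blast
  qed
  finally show ?thesis unfolding PB_def t_def A_def .
qed

definition ndec :: "real set \<Rightarrow> (real \<Rightarrow> real) \<Rightarrow> bool" where
  "ndec D f \<longleftrightarrow> (\<forall>x\<in>D. \<forall>y\<in>D. x \<le> y \<longrightarrow> f x \<le> f y)"

lemma ndec_cong: "ndec D f \<Longrightarrow> (\<And>x. x \<in> D \<Longrightarrow> f x = g x) \<Longrightarrow> ndec D g"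
  unfolding ndec_def by metis

lemma ndec_const: "ndec D (\<lambda>x. c)"
  unfolding ndec_def by simp

lemma ndec_add: "ndec D f \<Longrightarrow> ndec D g \<Longrightarrow> ndec D (\<lambda>x. f x + g x)"
  unfolding ndec_def by (meson add_mono)

lemma ndec_mult: "ndec D f \<Longrightarrow> ndec D g \<Longrightarrow> (\<And>x. x \<in> D \<Longrightarrow> 0 \<le> f x \<and> 0 \<le> g x)
   \<Longrightarrow> ndec D (\<lambda>x. f x * g x)"
  unfolding ndec_def by (meson mult_mono order_trans)

lemma ndec_comb:
  assumes "ndec D s" "ndec D X" "ndec D Y"
    and "\<And>x. x \<in> D \<Longrightarrow> 0 \<le> s x \<and> s x \<le> 1 \<and> Y x \<le> X x"
  shows "ndec D (\<lambda>x. s x * X x + (1 - s x) * Y x)"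
  unfolding ndec_def
proof (intro ballI impI)
  fix x y assume xy: "x \<in> D" "y \<in> D" "x \<le> y"
  have sx: "s x \<le> s y" "X x \<le> X y" "Y x \<le> Y y" using assms(1-3) xy unfolding ndec_def by auto
  have b: "0 \<le> s x" "s x \<le> 1" "Y x \<le> X x" "0 \<le> s y" "s y \<le> 1" using assms(4) xy by auto
  have "s x * X x + (1 - s x) * Y x = Y x + s x * (X x - Y x)" by algebra
  also have "\<dots> \<le> Y x + s y * (X x - Y x)" using b sx by (intro add_left_mono mult_right_mono) auto
  also have "\<dots> = s y * X x + (1 - s y) * Y x" by algebra
  also have "\<dots> \<le> s y * X y + (1 - s y) * Y y" using b sx by (intro add_mono mult_left_mono) auto
  finally show "s x * X x + (1 - s x) * Y x \<le> s y * X y + (1 - s y) * Y y" .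
qed

lemma PB_ndec:
  assumes "finite A" "\<forall>j\<in>A. ndec D (s j) \<and> (\<forall>x\<in>D. 0 \<le> s j x \<and> s j x \<le> 1)"
  shows "ndec D (\<lambda>x. PB A (\<lambda>j. s j x) k)"
  using assms
proof (induction A arbitrary: k rule: finite_induct)
  case empty
  then show ?case by (cases k) (auto simp: PB_empty ndec_const)
next
  case (insert a A)
  show ?case
  proof (cases k)
    case 0 then show ?thesis by (simp add: ndec_const)
  next
    case (Suc k')
    have "ndec D (\<lambda>x. s a x * PB A (\<lambda>j. s j x) k + (1 - s a x) * PB A (\<lambda>j. s j x) (k - 1))"
    proof (rule ndec_comb)
      show "ndec D (s a)" using insert by auto
      show "ndec D (\<lambda>x. PB A (\<lambda>j. s j x) k)" "ndec D (\<lambda>x. PB A (\<lambda>j. s j x) (k - 1))" using insert by auto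
      fix x assume "x \<in> D"
      then show "0 \<le> s a x \<and> s a x \<le> 1 \<and> PB A (\<lambda>j. s j x) (k - 1) \<le> PB A (\<lambda>j. s j x) k"
        using insert by (auto intro!: PB_mono_k)
    qed
    then show ?thesis
      by (rule ndec_cong) (use insert Suc in \<open>auto simp: PB_insert\<close>)
  qed
qed

lemma aux_L: fixes f q g1 g0 s :: real assumes "f \<noteq> 0" "q \<noteq> 0"
  shows "(s/f) * (g1/q + ((1-f)/f)*(g0/q)) + (1 - s/f) * (g0/q/f) = (s*g1 + (1-s)*g0)/(f*q)"
  using assms by (simp add: field_simps)

lemma aux_R: fixes q g1 g0 s :: real
  shows "s * (g1/q) + (1 - s) * (g0/q) = (s*g1 + (1-s)*g0)/q"
  by (simp add: add_divide_distrib)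

lemma PB_inv:
  fixes F T :: "real \<Rightarrow> real" and s :: "'a \<Rightarrow> real \<Rightarrow> real"
  assumes FT: "\<And>x. x \<in> D \<Longrightarrow> 0 < F x \<and> F x \<le> 1 \<and> 0 < T x"
    and m1: "ndec D (\<lambda>x. F x / T x)" and m2: "ndec D (\<lambda>x. 1 / T x)"
    and m3: "ndec D (\<lambda>x. (1 - F x) / T x)"
    and fin: "finite A"
    and sA: "\<forall>j\<in>A. ndec D (s j) \<and> (\<forall>x\<in>D. 0 \<le> s j x \<and> s j x \<le> 1)"
    and sL: "\<forall>j\<in>A \<inter> L. ndec D (\<lambda>x. s j x / F x) \<and> (\<forall>x\<in>D. s j x \<le> F x)"
  shows "\<forall>k\<ge>1. ndec D (\<lambda>x. PB A (\<lambda>j. s j x) k / (F x ^ card (A \<inter> L) * (T x / F x) ^ (k - 1)))"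
  using fin sA sL
proof (induction A rule: finite_induct)
  case empty
  show ?case
  proof (intro allI impI)
    fix k :: nat assume k: "1 \<le> k"
    have "ndec D (\<lambda>x. (F x / T x) ^ (k - 1))"
    proof (induction k)
      case 0 then show ?case by (simp add: ndec_const)
    next
      case (Suc k)
      show ?case
      proof (cases k)
        case 0 then show ?thesis by (simp add: ndec_const)
      next
        case (Suc k')
        have "ndec D (\<lambda>x. (F x / T x) ^ (k - 1) * (F x / T x))"
          using Suc.IH m1 by (intro ndec_mult) (auto dest!: FT)
        then show ?thesis by (rule ndec_cong) (simp add: Suc mult.commute)
      qed
    qed
    then show "ndec D (\<lambda>x. PB {} (\<lambda>j. s j x) k / (F x ^ card ({} \<inter> L) * (T x / F x) ^ (k - 1)))"
      by (rule ndec_cong) (use k FT in \<open>auto simp: PB_empty power_divide\<close>)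
  qed
next
  case (insert a A)
  define n where "n = card (A \<inter> L)"
  define G where "G = (\<lambda>k x. PB A (\<lambda>j. s j x) k)"
  define Q where "Q = (\<lambda>k x. F x ^ n * (T x / F x) ^ (k - 1))"
  define \<psi> where "\<psi> = (\<lambda>k x. G k x / Q k x)"
  define W where "W = (\<lambda>k x. if k \<le> 1 then 0 else \<psi> (k - 1) x)"
  define Y where "Y = (\<lambda>k x. G (k - 1) x / Q k x)"
  have sA': "\<forall>j\<in>A. ndec D (s j) \<and> (\<forall>x\<in>D. 0 \<le> s j x \<and> s j x \<le> 1)" using insert by auto
  have IH: "\<And>k. k \<ge> 1 \<Longrightarrow> ndec D (\<psi> k)"
    using insert unfolding \<psi>_def G_def Q_def n_def by auto
  have Qpos: "\<And>k x. x \<in> D \<Longrightarrow> Q k x > 0" unfolding Q_def using FT by auto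
  have Gb: "\<And>k x. x \<in> D \<Longrightarrow> 0 \<le> G k x \<and> G k x \<le> 1"
    unfolding G_def using insert.hyps(1) sA' by (intro PB_bounds) auto
  have Gmono: "\<And>k x. x \<in> D \<Longrightarrow> G (k - 1) x \<le> G k x"
    unfolding G_def using insert.hyps(1) sA' by (intro PB_mono_k) auto
  have psi_nn: "\<And>k x. x \<in> D \<Longrightarrow> 0 \<le> \<psi> k x" unfolding \<psi>_def using Gb Qpos
    by (simp add: less_imp_le)
  have W_nn: "\<And>k x. x \<in> D \<Longrightarrow> 0 \<le> W k x" unfolding W_def using psi_nn by auto
  have W_ndec: "\<And>k. ndec D (W k)"
  proof -
    fix k :: nat show "ndec D (W k)"
    proof (cases "k \<le> 1")
      case True then show ?thesis unfolding W_def by (simp add: ndec_const)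
    next
      case False then show ?thesis unfolding W_def using IH[of "k - 1"] by simp
    qed
  qed
  have eY: "\<And>k x. x \<in> D \<Longrightarrow> k \<ge> 1 \<Longrightarrow> Y k x = W k x * (F x / T x)"
  proof -
    fix k :: nat and x assume x: "x \<in> D" and k: "k \<ge> 1"
    show "Y k x = W k x * (F x / T x)"
    proof (cases "k = 1")
      case True then show ?thesis unfolding Y_def W_def G_def by simp
    next
      case False
      define j where "j = k - 2"
      have j: "k = Suc (Suc j)" using k False unfolding j_def by simp
      have "Q k x = Q (k - 1) x * (T x / F x)" unfolding Q_def j by simp
      have "Y k x = G (k - 1) x / (Q (k - 1) x * (T x / F x))" unfolding Y_def by (simp add: \<open>Q k x = _\<close>)
      also have "\<dots> = G (k - 1) x / Q (k - 1) x * (F x / T x)" by simp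
      finally show ?thesis unfolding W_def \<psi>_def using j by simp
    qed
  qed
  have Y_ndec: "\<And>k. k \<ge> 1 \<Longrightarrow> ndec D (Y k)"
  proof -
    fix k :: nat assume k: "k \<ge> 1"
    have "ndec D (\<lambda>x. W k x * (F x / T x))"
      proof (rule ndec_mult[OF W_ndec m1])
      fix x assume x: "x \<in> D"
      then have "0 < F x" "0 < T x" using FT by auto
      then show "0 \<le> W k x \<and> 0 \<le> F x / T x" using W_nn[OF x] by simp
    qed
    then show "ndec D (Y k)"
    proof (rule ndec_cong)
      fix x assume x: "x \<in> D"
      show "W k x * (F x / T x) = Y k x" using eY[OF x k] by simp
    qed
  qed
  have YleX: "\<And>k x. x \<in> D \<Longrightarrow> Y k x \<le> \<psi> k x"
    unfolding Y_def \<psi>_def using Gmono Qpos by (simp add: divide_right_mono less_imp_le)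
  have rec: "\<And>k x. k \<ge> 1 \<Longrightarrow> PB (insert a A) (\<lambda>j. s j x) k = s a x * G k x + (1 - s a x) * G (k - 1) x"
    unfolding G_def using insert.hyps by (intro PB_insert) auto
  show ?case
  proof (cases "a \<in> L")
    case False
    have card: "card (insert a A \<inter> L) = n" unfolding n_def using False by simp
    show ?thesis
    proof (intro allI impI)
      fix k :: nat assume k: "1 \<le> k"
      have "ndec D (\<lambda>x. s a x * \<psi> k x + (1 - s a x) * Y k x)"
        using insert.prems k IH Y_ndec YleX by (intro ndec_comb) auto
      then show "ndec D (\<lambda>x. PB (insert a A) (\<lambda>j. s j x) k / (F x ^ card (insert a A \<inter> L) * (T x / F x) ^ (k - 1)))"
      proof (rule ndec_cong)
        fix x assume x: "x \<in> D"
        show "s a x * \<psi> k x + (1 - s a x) * Y k x = PB (insert a A) (\<lambda>j. s j x) k / (F x ^ card (insert a A \<inter> L) * (T x / F x) ^ (k - 1))"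
        proof -
          have e: "F x ^ card (insert a A \<inter> L) * (T x / F x) ^ (k - 1) = Q k x" unfolding card Q_def by simp
          show ?thesis unfolding e rec[OF k] \<psi>_def Y_def by (rule aux_R)
        qed
      qed
    qed
  next
    case True
    have card: "card (insert a A \<inter> L) = Suc n" unfolding n_def using True insert.hyps by simp
    define \<kappa> where "\<kappa> = (\<lambda>x. s a x / F x)"
    have kap1: "ndec D \<kappa>" using insert.prems True unfolding \<kappa>_def by auto
    have kap2: "\<And>x. x \<in> D \<Longrightarrow> 0 \<le> \<kappa> x \<and> \<kappa> x \<le> 1"
    proof -
      fix x assume x: "x \<in> D"
      have "0 < F x" using FT x by auto
      moreover have "0 \<le> s a x" "s a x \<le> F x" using insert.prems True x by auto
      ultimately show "0 \<le> \<kappa> x \<and> \<kappa> x \<le> 1" unfolding \<kappa>_def by simp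
    qed
    note kap = kap1 kap2
    show ?thesis
    proof (intro allI impI)
      fix k :: nat assume k: "1 \<le> k"
      define Xt where "Xt = (\<lambda>x. \<psi> k x + W k x * ((1 - F x) / T x))"
      define Z where "Z = (\<lambda>x. W k x * (1 / T x))"
      have "ndec D (\<lambda>x. \<kappa> x * Xt x + (1 - \<kappa> x) * Z x)"
      proof (rule ndec_comb)
        show "ndec D \<kappa>" by (rule kap)
        have "ndec D (\<lambda>x. W k x * ((1 - F x) / T x))"
        proof (rule ndec_mult[OF W_ndec m3])
          fix x assume x: "x \<in> D"
          then have "0 < F x" "F x \<le> 1" "0 < T x" using FT by auto
          then show "0 \<le> W k x \<and> 0 \<le> (1 - F x) / T x" using W_nn[OF x] by simp
        qed
        then show "ndec D Xt" unfolding Xt_def using IH k by (intro ndec_add) auto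
        show "ndec D Z" unfolding Z_def
        proof (rule ndec_mult[OF W_ndec m2])
          fix x assume x: "x \<in> D"
          then have "0 < T x" using FT by auto
          then show "0 \<le> W k x \<and> 0 \<le> 1 / T x" using W_nn[OF x] by simp
        qed
        fix x assume x: "x \<in> D"
        have "Z x \<le> Xt x"
        proof -
          have "Z x = Y k x / F x" unfolding Z_def using eY[OF x k] FT[OF x] by simp
          moreover have "Xt x = \<psi> k x + ((1 - F x) / F x) * Y k x"
            unfolding Xt_def using eY[OF x k] FT[OF x] by simp
          moreover have "Y k x / F x \<le> \<psi> k x + ((1 - F x) / F x) * Y k x"
          proof -
            have "Y k x / F x = Y k x + ((1 - F x) / F x) * Y k x" using FT[OF x] by (simp add: field_simps)
            then show ?thesis using YleX[OF x, of k] by simp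
          qed
          ultimately show ?thesis by simp
        qed
        then show "0 \<le> \<kappa> x \<and> \<kappa> x \<le> 1 \<and> Z x \<le> Xt x" using kap x by auto
      qed
      then show "ndec D (\<lambda>x. PB (insert a A) (\<lambda>j. s j x) k / (F x ^ card (insert a A \<inter> L) * (T x / F x) ^ (k - 1)))"
      proof (rule ndec_cong)
        fix x assume x: "x \<in> D"
        have Fx: "F x > 0" using FT x by auto
        have Qx: "Q k x > 0" using Qpos x by auto
        have e1: "Xt x = \<psi> k x + ((1 - F x) / F x) * Y k x"
          unfolding Xt_def using eY[OF x k] FT[OF x] by simp
        have e2: "Z x = Y k x / F x" unfolding Z_def using eY[OF x k] FT[OF x] by simp
        have e3: "F x ^ card (insert a A \<inter> L) * (T x / F x) ^ (k - 1) = F x * Q k x"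
          unfolding card Q_def by simp
        show "\<kappa> x * Xt x + (1 - \<kappa> x) * Z x = PB (insert a A) (\<lambda>j. s j x) k / (F x ^ card (insert a A \<inter> L) * (T x / F x) ^ (k - 1))"
          unfolding e1 e2 e3 rec[OF k] \<kappa>_def \<psi>_def Y_def using Fx Qx
          by (intro aux_L) auto
      qed
    qed
  qed
qed

lemma frechet_cdf_meas[measurable]: "frechet_cdf \<alpha> \<in> borel_measurable borel"
  unfolding frechet_cdf_def by measurable
lemma frechet_pdf_meas[measurable]: "frechet_pdf \<alpha> \<in> borel_measurable borel"
  unfolding frechet_pdf_def by measurable
lemma pareto_cdf_meas[measurable]: "pareto_cdf \<alpha> \<in> borel_measurable borel"
  unfolding pareto_cdf_def by measurable
lemma pareto_pdf_meas[measurable]: "pareto_pdf \<alpha> \<in> borel_measurable borel"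
  unfolding pareto_pdf_def by measurable

lemma PB_meas[measurable]:
  assumes [measurable]: "\<And>j. (\<lambda>x. s j x) \<in> borel_measurable M"
  shows "(\<lambda>x. PB A (\<lambda>j. s j x) k) \<in> borel_measurable M"
  unfolding PB_def by measurable

lemma cheb:
  fixes h w T \<psi> :: "real \<Rightarrow> real" and D :: "real set" and C c0 :: real
  assumes hi: "set_integrable lborel D h" and Thi: "set_integrable lborel D (\<lambda>x. T x * h x)"
    and wi: "set_integrable lborel D (\<lambda>x. (T x - C) * w x)"
    and w0: "(LINT x:D|lborel. (T x - C) * w x) = 0"
    and mono: "ndec D \<psi>" and c0: "c0 \<in> D"
    and hw: "\<And>x. x \<in> D \<Longrightarrow> h x = \<psi> x * w x \<and> 0 \<le> w x"
    and le: "\<And>x. x \<in> D \<Longrightarrow> x \<le> c0 \<Longrightarrow> C \<le> T x"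
    and ge: "\<And>x. x \<in> D \<Longrightarrow> c0 \<le> x \<Longrightarrow> T x \<le> C"
  shows "(LINT x:D|lborel. T x * h x) \<le> C * (LINT x:D|lborel. h x)"
proof -
  have i1: "set_integrable lborel D (\<lambda>x. T x * h x - C * h x)"
    using Thi hi by (intro set_integral_diff) auto
  have i2: "set_integrable lborel D (\<lambda>x. \<psi> c0 * ((T x - C) * w x))"
    using wi by (intro set_integrable_mult_right) auto
  have "(LINT x:D|lborel. T x * h x - C * h x) \<le> (LINT x:D|lborel. \<psi> c0 * ((T x - C) * w x))"
  proof (rule set_integral_mono[OF i1 i2])
    fix x assume x: "x \<in> D"
    have hx: "h x = \<psi> x * w x" "0 \<le> w x" using hw x by auto
    have "(T x - C) * \<psi> x \<le> (T x - C) * \<psi> c0"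
    proof (cases "x \<le> c0")
      case True
      then have "\<psi> x \<le> \<psi> c0" "C \<le> T x" using mono x c0 le unfolding ndec_def by auto
      then show ?thesis by (intro mult_left_mono) auto
    next
      case False
      then have "\<psi> c0 \<le> \<psi> x" "T x \<le> C" using mono x c0 ge unfolding ndec_def by auto
      then show ?thesis by (intro mult_left_mono_neg) auto
    qed
    then have "(T x - C) * \<psi> x * w x \<le> (T x - C) * \<psi> c0 * w x" using hx by (intro mult_right_mono) auto
    then show "T x * h x - C * h x \<le> \<psi> c0 * ((T x - C) * w x)" using hx by (simp add: algebra_simps)
  qed
  also have "\<dots> = 0" using w0 by simp
  finally have "(LINT x:D|lborel. T x * h x - C * h x) \<le> 0" .
  moreover have "(LINT x:D|lborel. T x * h x - C * h x) = (LINT x:D|lborel. T x * h x) - C * (LINT x:D|lborel. h x)"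
    using Thi hi by (subst set_integral_diff) auto
  ultimately show ?thesis by simp
qed

lemma set_integral_add_point:
  fixes g :: "real \<Rightarrow> real"
  assumes "set_integrable lborel A g" and [measurable]: "A \<in> sets borel"
    and [measurable]: "set_borel_measurable lborel (insert c A) g"
  shows "set_integrable lborel (insert c A) g \<and> (LINT x:insert c A|lborel. g x) = (LINT x:A|lborel. g x)"
proof -
  have m2: "(\<lambda>x. indicator A x *\<^sub>R g x) \<in> borel_measurable lborel"
  proof -
    have "(\<lambda>x. indicator A x * (indicator (insert c A) x *\<^sub>R g x)) \<in> borel_measurable lborel"
      using assms(3) unfolding set_borel_measurable_def by measurable
    moreover have "(\<lambda>x. indicator A x * (indicator (insert c A) x *\<^sub>R g x)) = (\<lambda>x. indicator A x *\<^sub>R g x)"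
      by (auto simp: indicator_def)
    ultimately show ?thesis by simp
  qed
  have ae: "AE x in lborel. indicator (insert c A) x *\<^sub>R g x = indicator A x *\<^sub>R g x"
    using AE_lborel_singleton[of c] by eventually_elim (auto simp: indicator_def)
  have "integrable lborel (\<lambda>x. indicator (insert c A) x *\<^sub>R g x) = integrable lborel (\<lambda>x. indicator A x *\<^sub>R g x)"
    using assms(3) m2 ae unfolding set_borel_measurable_def by (intro integrable_cong_AE) auto
  moreover have "integral\<^sup>L lborel (\<lambda>x. indicator (insert c A) x *\<^sub>R g x) = integral\<^sup>L lborel (\<lambda>x. indicator A x *\<^sub>R g x)"
    using assms(3) m2 ae unfolding set_borel_measurable_def by (intro integral_cong_AE) auto
  ultimately show ?thesis using assms(1) unfolding set_integrable_def set_lebesgue_integral_def by simp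
qed

lemma ftc_zero:
  fixes g \<Phi> :: "real \<Rightarrow> real" and a c :: real
  assumes ac: "a < c"
    and deriv: "\<And>x. a < x \<Longrightarrow> DERIV \<Phi> x :> g x" and cont: "\<And>x. a < x \<Longrightarrow> isCont g x"
    and pos: "\<And>x. a < x \<Longrightarrow> x \<le> c \<Longrightarrow> 0 \<le> g x" and neg: "\<And>x. c \<le> x \<Longrightarrow> g x \<le> 0"
    and lim0: "(\<Phi> \<longlongrightarrow> 0) (at_right a)" and limi: "(\<Phi> \<longlongrightarrow> 0) at_top"
  shows "set_integrable lborel {a<..} g \<and> (LINT x:{a<..}|lborel. g x) = 0"
proof -
  have contPhi: "isCont \<Phi> c" using deriv[of c] ac by (auto intro: DERIV_isCont)
  have limc: "(\<Phi> \<longlongrightarrow> \<Phi> c) (at_left c)" "(\<Phi> \<longlongrightarrow> \<Phi> c) (at_right c)"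
    using contPhi by (auto simp: isCont_def filterlim_at_split)
  have F1: "set_integrable lborel (einterval (ereal a) (ereal c)) g"
     "(LBINT x=ereal a..ereal c. g x) = \<Phi> c - 0"
  proof -
    note r = interval_integral_FTC_nonneg[of "ereal a" "ereal c" \<Phi> g 0 "\<Phi> c"]
    have p1: "ereal a < ereal c" using ac by simp
    have p2: "\<And>x. ereal a < ereal x \<Longrightarrow> ereal x < ereal c \<Longrightarrow> DERIV \<Phi> x :> g x" using deriv by auto
    have p3: "\<And>x. ereal a < ereal x \<Longrightarrow> ereal x < ereal c \<Longrightarrow> isCont g x" using cont by auto
    have p4: "AE x in lborel. ereal a < ereal x \<longrightarrow> ereal x < ereal c \<longrightarrow> 0 \<le> g x" using pos by auto
    have p5: "((\<Phi> \<circ> real_of_ereal) \<longlongrightarrow> 0) (at_right (ereal a))" using lim0 by (simp add: ereal_tendsto_simps1)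
    have p6: "((\<Phi> \<circ> real_of_ereal) \<longlongrightarrow> \<Phi> c) (at_left (ereal c))" using limc by (simp add: ereal_tendsto_simps1)
    show "set_integrable lborel (einterval (ereal a) (ereal c)) g" "(LBINT x=ereal a..ereal c. g x) = \<Phi> c - 0"
      using r[OF p1 p2 p3 p4 p5 p6] by auto
  qed
  have F2: "set_integrable lborel (einterval (ereal c) \<infinity>) (\<lambda>x. - g x)"
     "(LBINT x=ereal c..\<infinity>. - g x) = 0 - (- \<Phi> c)"
  proof -
    note r = interval_integral_FTC_nonneg[of "ereal c" "\<infinity>" "\<lambda>x. - \<Phi> x" "\<lambda>x. - g x" "- \<Phi> c" 0]
    have p1: "ereal c < \<infinity>" by simp
    have p2: "\<And>x. ereal c < ereal x \<Longrightarrow> ereal x < \<infinity> \<Longrightarrow> DERIV (\<lambda>x. - \<Phi> x) x :> - g x"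
      using deriv ac by (auto intro!: derivative_intros)
    have p3: "\<And>x. ereal c < ereal x \<Longrightarrow> ereal x < \<infinity> \<Longrightarrow> isCont (\<lambda>x. - g x) x" using cont ac by auto
    have p4: "AE x in lborel. ereal c < ereal x \<longrightarrow> ereal x < \<infinity> \<longrightarrow> 0 \<le> - g x" using neg by auto
    have p5: "(((\<lambda>x. - \<Phi> x) \<circ> real_of_ereal) \<longlongrightarrow> - \<Phi> c) (at_right (ereal c))"
      using limc by (simp add: ereal_tendsto_simps1 tendsto_minus)
    have p6: "(((\<lambda>x. - \<Phi> x) \<circ> real_of_ereal) \<longlongrightarrow> 0) (at_left \<infinity>)"
      using tendsto_minus[OF limi] by (simp add: ereal_tendsto_simps1)
    show "set_integrable lborel (einterval (ereal c) \<infinity>) (\<lambda>x. - g x)" "(LBINT x=ereal c..\<infinity>. - g x) = 0 - (- \<Phi> c)"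
      using r[OF p1 p2 p3 p4 p5 p6] by auto
  qed
  have I1: "set_integrable lborel {a<..<c} g" "(LINT x:{a<..<c}|lborel. g x) = \<Phi> c"
    using F1 ac by (auto simp: interval_lebesgue_integral_le_eq)
  have I2': "set_integrable lborel {c<..} (\<lambda>x. - g x)" "(LINT x:{c<..}|lborel. - g x) = \<Phi> c"
    using F2 by (auto simp: interval_integral_to_infinity_eq)
  have I2: "set_integrable lborel {c<..} g" "(LINT x:{c<..}|lborel. g x) = - \<Phi> c"
  proof -
    show i: "set_integrable lborel {c<..} g"
      using set_integrable_mult_right[OF I2'(1), of "-1"] by simp
    show "(LINT x:{c<..}|lborel. g x) = - \<Phi> c"
      using set_integral_uminus[OF i] I2'(2) by simp
  qed
  have U: "set_integrable lborel ({a<..<c} \<union> {c<..}) g"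
    "(LINT x:{a<..<c} \<union> {c<..}|lborel. g x) = 0"
  proof -
    show "set_integrable lborel ({a<..<c} \<union> {c<..}) g" using I1 I2 by (intro set_integrable_Un) auto
    have "(LINT x:{a<..<c} \<union> {c<..}|lborel. g x) = (LINT x:{a<..<c}|lborel. g x) + (LINT x:{c<..}|lborel. g x)"
      using I1 I2 by (intro set_integral_Un) auto
    then show "(LINT x:{a<..<c} \<union> {c<..}|lborel. g x) = 0" using I1 I2 by simp
  qed
  have eqset: "insert c ({a<..<c} \<union> {c<..}) = {a<..}" using ac by auto
  have meas: "set_borel_measurable lborel {a<..} g"
  proof -
    have "continuous_on {a<..} g" using cont by (intro continuous_at_imp_continuous_on) auto
    then show ?thesis unfolding set_borel_measurable_def measurable_lborel2
      by (intro borel_measurable_continuous_on_indicator) auto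
  qed
  show ?thesis using set_integral_add_point[OF U(1), of c] meas U(2) unfolding eqset by auto
qed

lemma set_int_nonneg:
  fixes h :: "real \<Rightarrow> real"
  assumes "\<And>x. x \<in> D \<Longrightarrow> 0 \<le> h x"
  shows "0 \<le> (LINT x:D|lborel. h x)"
  unfolding set_lebesgue_integral_def
  using assms by (intro Bochner_Integration.integral_nonneg) (auto simp: indicator_def)

lemma young_step:
  fixes h T :: "real \<Rightarrow> real" and D :: "real set" and \<alpha> C :: real
  assumes a: "\<alpha> > 1" and C: "C > 0" and hi: "set_integrable lborel D h"
    and Thi: "set_integrable lborel D (\<lambda>x. T x * h x)"
    and K: "(LINT x:D|lborel. T x * h x) \<le> C * (LINT x:D|lborel. h x)"
    and pos: "\<And>x. x \<in> D \<Longrightarrow> 0 \<le> h x \<and> 0 < T x \<and> 1 / x = T x powr (1 / \<alpha>)"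
  shows "(LINT x:D|lborel. h x / x) \<le> C powr (1 / \<alpha>) * (LINT x:D|lborel. h x)"
proof -
  define \<phi> where "\<phi> = (LINT x:D|lborel. h x)"
  have phi0: "0 \<le> \<phi>" unfolding \<phi>_def using pos by (intro set_int_nonneg) auto
  have Cp: "0 < C powr (1 / \<alpha>)" using C by simp
  show ?thesis
  proof (cases "set_integrable lborel D (\<lambda>x. h x / x)")
    case False
    then have "(LINT x:D|lborel. h x / x) = 0"
      unfolding set_integrable_def set_lebesgue_integral_def by (simp add: not_integrable_integral_eq)
    then show ?thesis using phi0 Cp unfolding \<phi>_def by simp
  next
    case True
    define R where "R = (\<lambda>x. C powr (1 / \<alpha>) * ((T x * h x) / (\<alpha> * C) + (1 - 1 / \<alpha>) * h x))"
    have Ri: "set_integrable lborel D R" unfolding R_def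
      using hi Thi a C by (intro set_integrable_mult_right set_integral_add set_integrable_mult_left
          set_integrable_divide) auto
    have "(LINT x:D|lborel. h x / x) \<le> (LINT x:D|lborel. R x)"
    proof (rule set_integral_mono[OF True Ri])
      fix x assume x: "x \<in> D"
      have hx: "0 \<le> h x" "0 < T x" "1 / x = T x powr (1 / \<alpha>)" using pos x by auto
      have y: "(T x / C) powr (1 / \<alpha>) * 1 powr (1 - 1 / \<alpha>) \<le> (1 / \<alpha>) * (T x / C) + (1 - 1 / \<alpha>) * 1"
        using a C hx by (intro Youngs_inequality_0) auto
      have "T x powr (1 / \<alpha>) = C powr (1 / \<alpha>) * (T x / C) powr (1 / \<alpha>)"
        using C hx by (simp add: powr_divide)
      also have "\<dots> \<le> C powr (1 / \<alpha>) * ((1 / \<alpha>) * (T x / C) + (1 - 1 / \<alpha>))"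
        using y Cp by (intro mult_left_mono) auto
      finally have t: "T x powr (1 / \<alpha>) \<le> C powr (1 / \<alpha>) * ((1 / \<alpha>) * (T x / C) + (1 - 1 / \<alpha>))" .
      have "h x / x = h x * T x powr (1 / \<alpha>)" using hx(3) by (metis divide_inverse inverse_eq_divide)
      also have "\<dots> \<le> h x * (C powr (1 / \<alpha>) * ((1 / \<alpha>) * (T x / C) + (1 - 1 / \<alpha>)))"
        using t hx by (intro mult_left_mono) auto
      also have "\<dots> = R x" unfolding R_def by (simp add: field_simps)
      finally show "h x / x \<le> R x" .
    qed
    also have "(LINT x:D|lborel. R x) = C powr (1 / \<alpha>) * ((LINT x:D|lborel. T x * h x) / (\<alpha> * C) + (1 - 1 / \<alpha>) * \<phi>)"
      unfolding R_def \<phi>_def using hi Thi by (simp add: set_integral_add set_integrable_mult_right set_integrable_divide)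
    also have "\<dots> \<le> C powr (1 / \<alpha>) * ((C * \<phi>) / (\<alpha> * C) + (1 - 1 / \<alpha>) * \<phi>)"
      using K a C Cp unfolding \<phi>_def by (intro mult_left_mono add_right_mono divide_right_mono) auto
    also have "\<dots> = C powr (1 / \<alpha>) * \<phi>" using a C by (simp add: field_simps)
    finally show ?thesis unfolding \<phi>_def .
  qed
qed

lemma ratio_le:
  fixes J \<phi> c :: real
  assumes "J \<le> c * \<phi>" "0 \<le> \<phi>" "0 \<le> c"
  shows "J / \<phi> \<le> c"
  using assms by (cases "\<phi> = 0") (auto simp: divide_le_eq)

lemma powr_m_at_right0: assumes "(\<alpha>::real) > 0" shows "filterlim (\<lambda>x::real. x powr -\<alpha>) at_top (at_right 0)"
proof -
  have "((\<lambda>x::real. x powr \<alpha>) \<longlongrightarrow> 0 powr \<alpha>) (at_right 0)"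
    using assms by (intro tendsto_intros) (auto simp: eventually_at_right_less eventually_at_filter)
  then have l: "((\<lambda>x::real. x powr \<alpha>) \<longlongrightarrow> 0) (at_right 0)" by simp
  have e: "eventually (\<lambda>x::real. 0 < x powr \<alpha>) (at_right 0)"
    by (auto simp: eventually_at_filter)
  show ?thesis using filterlim_inverse_at_top[OF l e] by (simp add: powr_minus)
qed

lemma upoly_exp_0:
  fixes m k :: nat assumes "k \<ge> 1"
  shows "((\<lambda>u::real. u ^ m * exp (-u) ^ k) \<longlongrightarrow> 0) at_top"
proof (rule tendsto_sandwich[of "\<lambda>_. 0" _ _ "\<lambda>u. u ^ m / exp u"])
  show "((\<lambda>_. 0::real) \<longlongrightarrow> 0) at_top" by simp
  show "((\<lambda>u::real. u ^ m / exp u) \<longlongrightarrow> 0) at_top" by (rule tendsto_power_div_exp_0)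
  show "\<forall>\<^sub>F u in at_top. 0 \<le> (u::real) ^ m * exp (- u) ^ k"
    by (rule eventually_mono[OF eventually_ge_at_top[of "0::real"]]) simp
  show "\<forall>\<^sub>F u in at_top. (u::real) ^ m * exp (- u) ^ k \<le> u ^ m / exp u"
    using eventually_ge_at_top[of 0]
  proof eventually_elim
    fix u :: real assume u: "0 \<le> u"
    have "exp (-u) ^ k \<le> exp (-u) ^ 1"
      using assms by (intro power_decreasing) (auto simp: u)
    then have "u ^ m * exp (- u) ^ k \<le> u ^ m * exp (-u)" using u by (intro mult_left_mono) auto
    then show "u ^ m * exp (- u) ^ k \<le> u ^ m / exp u" by (simp add: exp_minus divide_inverse)
  qed
qed

definition wF :: "real \<Rightarrow> nat \<Rightarrow> nat \<Rightarrow> real \<Rightarrow> real" where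
  "wF \<alpha> n m x = \<alpha> * x powr (-(\<alpha>+1)) * exp (-(x powr -\<alpha>)) * exp (-(x powr -\<alpha>)) ^ n
      * (x powr -\<alpha> / exp (-(x powr -\<alpha>))) ^ (m - 1)"

lemma wF_simp:
  assumes "x > 0" "1 \<le> m" "m \<le> n + 1"
  shows "wF \<alpha> n m x = \<alpha> * x powr (-(\<alpha>+1)) * (x powr -\<alpha>) ^ (m - 1) * exp (-(x powr -\<alpha>)) ^ (n + 2 - m)"
proof -
  define E where "E = exp (-(x powr -\<alpha>))"
  define u where "u = x powr -\<alpha>"
  have E: "E > 0" unfolding E_def by simp
  have "E * E ^ n = E ^ (n + 2 - m) * E ^ (m - 1)"
    using assms by (simp add: power_add[symmetric])
  then have eq: "E * E ^ n * (u / E) ^ (m - 1) = u ^ (m - 1) * E ^ (n + 2 - m)"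
    using E by (simp add: power_divide field_simps)
  have "wF \<alpha> n m x = \<alpha> * x powr (-(\<alpha>+1)) * (E * E ^ n * (u / E) ^ (m - 1))"
    unfolding wF_def E_def u_def by (simp add: mult.assoc)
  also have "\<dots> = \<alpha> * x powr (-(\<alpha>+1)) * (u ^ (m - 1) * E ^ (n + 2 - m))" using eq by simp
  finally show ?thesis unfolding E_def u_def by (simp add: mult.assoc)
qed

lemma frechet_ftc:
  fixes \<alpha> :: real and n m :: nat
  assumes a: "\<alpha> > 0" and m: "1 \<le> m" "m \<le> n + 1"
  defines "C \<equiv> real m / real (n + 2 - m)"
  shows "set_integrable lborel {0<..} (\<lambda>x. (x powr -\<alpha> - C) * wF \<alpha> n m x)
     \<and> (LINT x:{0<..}|lborel. (x powr -\<alpha> - C) * wF \<alpha> n m x) = 0"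
proof -
  define k where "k = n + 2 - m"
  have k1: "k \<ge> 1" unfolding k_def using m by simp
  have Cpos: "C > 0" unfolding C_def using m by simp
  define \<phi> where "\<phi> = (\<lambda>u::real. u ^ m * exp (-(real k * u)) / real k)"
  define \<phi>' where "\<phi>' = (\<lambda>u::real. (real m * u ^ (m - 1) - real k * u ^ m) * exp (-(real k * u)) / real k)"
  define c0 where "c0 = C powr (-1/\<alpha>)"
  have c0: "c0 > 0" unfolding c0_def using Cpos by simp
  have c0C: "c0 powr -\<alpha> = C" unfolding c0_def using Cpos a by (simp add: powr_powr)
  have dphi: "DERIV \<phi> u :> \<phi>' u" for u
  proof -
    have d: "DERIV (\<lambda>u. u ^ m * exp (-(real k * u))) u :>
       real m * u ^ (m - 1) * exp (-(real k * u)) + u ^ m * (exp (-(real k * u)) * (- real k))"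
      by (auto intro!: derivative_eq_intros)
    show ?thesis using DERIV_cdivide[OF d, of "real k"] unfolding \<phi>_def \<phi>'_def
      by (simp add: algebra_simps)
  qed
  define g where "g = (\<lambda>x. (x powr -\<alpha> - C) * wF \<alpha> n m x)"
  have gform: "g x = \<phi>' (x powr -\<alpha>) * (-\<alpha> * x powr (-\<alpha> - 1))" if x: "x > 0" for x
  proof -
    define u where "u = x powr -\<alpha>"
    define E where "E = exp (-(real k * u))"
    have "exp (-u) ^ k = E" unfolding E_def using exp_of_nat_mult[of k "-u"] by simp
    then have "g x = (u - C) * (\<alpha> * x powr (-(\<alpha>+1)) * u ^ (m - 1) * E)"
      unfolding g_def u_def k_def using wF_simp[OF x m] by simp
    also have "\<dots> = \<phi>' u * (-\<alpha> * x powr (-\<alpha> - 1))"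
    proof -
      have um: "u ^ m = u * u ^ (m - 1)" using m by (metis One_nat_def Suc_pred less_eq_Suc_le power_Suc)
      have kk: "real k > 0" using k1 by simp
      have "C = real m / real k" unfolding C_def k_def by simp
      then have mC: "real m = C * real k" using kk by simp
      have xp: "x powr (- \<alpha> - 1) = x powr (-(\<alpha>+1))" by (simp only: minus_add_distrib diff_conv_add_uminus)
      show ?thesis unfolding \<phi>'_def E_def[symmetric] um xp mC using kk
        by (simp add: field_simps)
    qed
    finally show ?thesis unfolding u_def .
  qed
  have deriv: "DERIV (\<lambda>x. \<phi> (x powr -\<alpha>)) x :> g x" if "0 < x" for x
  proof -
    have "DERIV (\<lambda>x. x powr -\<alpha>) x :> -\<alpha> * x powr (-\<alpha> - 1)"
      using has_real_derivative_powr[OF that] .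
    from DERIV_chain2[OF dphi this] show ?thesis using gform[OF that] by simp
  qed
  have cont: "isCont g x" if "0 < x" for x
    unfolding g_def wF_def using that by (intro continuous_intros) auto
  have sgn: "0 \<le> g x" if "0 < x" "x \<le> c0" for x
  proof -
    have "c0 powr -\<alpha> \<le> x powr -\<alpha>" using that a by (intro powr_mono2') auto
    then have "C \<le> x powr -\<alpha>" using c0C by simp
    moreover have "0 \<le> wF \<alpha> n m x" unfolding wF_def using that a by simp
    ultimately show ?thesis unfolding g_def by simp
  qed
  have sgn2: "g x \<le> 0" if "c0 \<le> x" for x
  proof -
    have "x powr -\<alpha> \<le> c0 powr -\<alpha>" using that a c0 by (intro powr_mono2') auto
    then have "x powr -\<alpha> \<le> C" using c0C by simp
    moreover have "0 \<le> wF \<alpha> n m x" unfolding wF_def using that c0 a by simp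
    ultimately show ?thesis unfolding g_def by (simp add: mult_nonpos_nonneg)
  qed
  have phi0: "(\<phi> \<longlongrightarrow> 0) at_top"
  proof -
    have "(\<lambda>u. u ^ m * exp (-(real k * u)) / real k) = (\<lambda>u. u ^ m * exp (-u) ^ k / real k)"
      using exp_of_nat_mult[of k] by (auto simp: fun_eq_iff simp flip: exp_of_nat_mult)
    then show ?thesis unfolding \<phi>_def using upoly_exp_0[OF k1, of m] by (simp add: tendsto_divide_zero)
  qed
  have lim0: "((\<lambda>x. \<phi> (x powr -\<alpha>)) \<longlongrightarrow> 0) (at_right 0)"
    using filterlim_compose[OF phi0 powr_m_at_right0[OF a]] .
  have limi: "((\<lambda>x. \<phi> (x powr -\<alpha>)) \<longlongrightarrow> 0) at_top"
  proof -
    have "((\<lambda>x::real. x powr -\<alpha>) \<longlongrightarrow> 0) at_top"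
      using a by (intro tendsto_neg_powr filterlim_ident) auto
    then have "((\<lambda>x. (x powr -\<alpha>) ^ m * exp (-(real k * x powr -\<alpha>)) / real k) \<longlongrightarrow> 0 ^ m * exp (-(real k * 0)) / real k) at_top"
      using k1 by (intro tendsto_intros) auto
    moreover have "(0::real) ^ m = 0" using m by simp
    ultimately show ?thesis unfolding \<phi>_def by simp
  qed
  show ?thesis using ftc_zero[OF c0 deriv cont sgn sgn2 lim0 limi] unfolding g_def by auto
qed

definition wP :: "real \<Rightarrow> nat \<Rightarrow> nat \<Rightarrow> real \<Rightarrow> real" where
  "wP \<alpha> n m x = \<alpha> * x powr (-(\<alpha>+1)) * (1 - x powr -\<alpha>) ^ n
      * (x powr -\<alpha> / (1 - x powr -\<alpha>)) ^ (m - 1)"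

lemma wP_simp:
  assumes "1 - x powr -\<alpha> > 0" "1 \<le> m" "m \<le> n + 1"
  shows "wP \<alpha> n m x = \<alpha> * x powr (-(\<alpha>+1)) * (x powr -\<alpha>) ^ (m - 1) * (1 - x powr -\<alpha>) ^ (n + 1 - m)"
proof -
  define E where "E = 1 - x powr -\<alpha>"
  define u where "u = x powr -\<alpha>"
  have E: "E > 0" unfolding E_def using assms by simp
  have "E ^ n = E ^ (n + 1 - m) * E ^ (m - 1)"
    using assms by (simp add: power_add[symmetric])
  then have eq: "E ^ n * (u / E) ^ (m - 1) = u ^ (m - 1) * E ^ (n + 1 - m)"
    using E by (simp add: power_divide field_simps)
  have "wP \<alpha> n m x = \<alpha> * x powr (-(\<alpha>+1)) * (E ^ n * (u / E) ^ (m - 1))"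
    unfolding wP_def E_def u_def by (simp add: mult.assoc)
  also have "\<dots> = \<alpha> * x powr (-(\<alpha>+1)) * (u ^ (m - 1) * E ^ (n + 1 - m))" using eq by simp
  finally show ?thesis unfolding E_def u_def by (simp add: mult.assoc)
qed

lemma pareto_ftc:
  fixes \<alpha> :: real and n m :: nat
  assumes a: "\<alpha> > 0" and m: "1 \<le> m" "m \<le> n + 1"
  defines "C \<equiv> real m / real (n + 2)"
  shows "set_integrable lborel {1<..} (\<lambda>x. (x powr -\<alpha> - C) * wP \<alpha> n m x)
     \<and> (LINT x:{1<..}|lborel. (x powr -\<alpha> - C) * wP \<alpha> n m x) = 0"
proof -
  define j where "j = n + 1 - m"
  define N where "N = n + 2"
  have NN: "real N = real m + real j + 1" unfolding N_def j_def using m by simp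
  have Cpos: "C > 0" "C < 1" unfolding C_def using m by auto
  define \<phi> where "\<phi> = (\<lambda>u::real. u ^ m * (1 - u) ^ Suc j / real N)"
  define \<phi>' where "\<phi>' = (\<lambda>u::real. (real m - real N * u) * u ^ (m - 1) * (1 - u) ^ j / real N)"
  define c0 where "c0 = C powr (-1/\<alpha>)"
  have c0C: "c0 powr -\<alpha> = C" unfolding c0_def using Cpos a by (simp add: powr_powr)
  have c0: "c0 > 1"
  proof (rule ccontr)
    assume "\<not> c0 > 1"
    then have "1 powr -\<alpha> \<le> c0 powr -\<alpha>" unfolding c0_def using Cpos a by (intro powr_mono2') auto
    then show False using c0C Cpos by simp
  qed
  have dphi: "DERIV \<phi> u :> \<phi>' u" for u
  proof -
    have d: "DERIV (\<lambda>u. u ^ m * (1 - u) ^ Suc j) u :>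
       real m * u ^ (m - 1) * (1 - u) ^ Suc j + u ^ m * (real (Suc j) * (1 - u) ^ j * (- 1))"
      by (auto intro!: derivative_eq_intros) (cases j; simp add: algebra_simps)
    have um: "u ^ m = u * u ^ (m - 1)" using m by (metis One_nat_def Suc_pred less_eq_Suc_le power_Suc)
    have e: "real m * u ^ (m - 1) * (1 - u) ^ Suc j + u ^ m * (real (Suc j) * (1 - u) ^ j * (- 1))
        = (real m - real N * u) * u ^ (m - 1) * (1 - u) ^ j"
      unfolding um NN by (simp add: algebra_simps)
    show ?thesis using DERIV_cdivide[OF d, of "real N"] unfolding \<phi>_def \<phi>'_def e by simp
  qed
  define g where "g = (\<lambda>x. (x powr -\<alpha> - C) * wP \<alpha> n m x)"
  have u1: "1 - x powr -\<alpha> > 0" if "x > 1" for x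
  proof -
    have "x powr -\<alpha> < 1 powr -\<alpha>" using that a by (intro powr_less_mono2_neg) auto
    then show ?thesis by simp
  qed
  have gform: "g x = \<phi>' (x powr -\<alpha>) * (-\<alpha> * x powr (-\<alpha> - 1))" if x: "x > 1" for x
  proof -
    define u where "u = x powr -\<alpha>"
    have "g x = (u - C) * (\<alpha> * x powr (-(\<alpha>+1)) * u ^ (m - 1) * (1 - u) ^ j)"
      unfolding g_def u_def j_def using wP_simp[OF u1[OF x] m] by simp
    also have "\<dots> = \<phi>' u * (-\<alpha> * x powr (-\<alpha> - 1))"
    proof -
      have kk: "real N > 0" unfolding N_def by simp
      have "C = real m / real N" unfolding C_def N_def by simp
      then have mC: "real m = C * real N" using kk by simp
      have xp: "x powr (- \<alpha> - 1) = x powr (-(\<alpha>+1))" by (simp only: minus_add_distrib diff_conv_add_uminus)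
      show ?thesis unfolding \<phi>'_def xp mC using kk
        by (simp add: field_simps)
    qed
    finally show ?thesis unfolding u_def .
  qed
  have deriv: "DERIV (\<lambda>x. \<phi> (x powr -\<alpha>)) x :> g x" if "1 < x" for x
  proof -
    have "DERIV (\<lambda>x. x powr -\<alpha>) x :> -\<alpha> * x powr (-\<alpha> - 1)"
      using has_real_derivative_powr[of x "-\<alpha>"] that by simp
    from DERIV_chain2[OF dphi this] show ?thesis using gform[OF that] by simp
  qed
  have cont: "isCont g x" if "1 < x" for x
    unfolding g_def wP_def using that u1[OF that] by (intro continuous_intros) auto
  have sgn: "0 \<le> g x" if "1 < x" "x \<le> c0" for x
  proof -
    have "c0 powr -\<alpha> \<le> x powr -\<alpha>" using that a by (intro powr_mono2') auto
    then have "C \<le> x powr -\<alpha>" using c0C by simp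
    moreover have "0 \<le> wP \<alpha> n m x" unfolding wP_def using that a u1[OF that(1)] by simp
    ultimately show ?thesis unfolding g_def by simp
  qed
  have sgn2: "g x \<le> 0" if "c0 \<le> x" for x
  proof -
    have x1: "1 < x" using that c0 by simp
    have "x powr -\<alpha> \<le> c0 powr -\<alpha>" using that a c0 by (intro powr_mono2') auto
    then have "x powr -\<alpha> \<le> C" using c0C by simp
    moreover have "0 \<le> wP \<alpha> n m x" unfolding wP_def using x1 a u1[OF x1] by simp
    ultimately show ?thesis unfolding g_def by (simp add: mult_nonpos_nonneg)
  qed
  have lim0: "((\<lambda>x. \<phi> (x powr -\<alpha>)) \<longlongrightarrow> 0) (at_right 1)"
  proof -
    have "((\<lambda>x::real. x powr -\<alpha>) \<longlongrightarrow> 1 powr -\<alpha>) (at_right 1)"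
      by (intro tendsto_intros) auto
    then have "((\<lambda>x. (x powr -\<alpha>) ^ m * (1 - x powr -\<alpha>) ^ Suc j / real N) \<longlongrightarrow> 1 ^ m * (1 - 1) ^ Suc j / real N) (at_right 1)"
      unfolding N_def by (intro tendsto_intros) auto
    then show ?thesis unfolding \<phi>_def by simp
  qed
  have limi: "((\<lambda>x. \<phi> (x powr -\<alpha>)) \<longlongrightarrow> 0) at_top"
  proof -
    have "((\<lambda>x::real. x powr -\<alpha>) \<longlongrightarrow> 0) at_top"
      using a by (intro tendsto_neg_powr filterlim_ident) auto
    then have "((\<lambda>x. (x powr -\<alpha>) ^ m * (1 - x powr -\<alpha>) ^ Suc j / real N) \<longlongrightarrow> 0 ^ m * (1 - 0) ^ Suc j / real N) at_top"
      unfolding N_def by (intro tendsto_intros) auto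
    moreover have "(0::real) ^ m = 0" using m by simp
    ultimately show ?thesis unfolding \<phi>_def by simp
  qed
  have c01: "1 < c0" using c0 .
  show ?thesis using ftc_zero[OF c01 deriv cont sgn sgn2 lim0 limi] unfolding g_def by auto
qed

lemma core:
  fixes \<alpha> a :: real and F f :: "real \<Rightarrow> real" and A L :: "nat set" and s :: "nat \<Rightarrow> real \<Rightarrow> real"
    and n m :: nat and CC :: "nat \<Rightarrow> nat \<Rightarrow> real"
  assumes \<alpha>: "\<alpha> > 1" and a0: "0 \<le> a"
    and FT: "\<And>x. x \<in> {a<..} \<Longrightarrow> 0 < F x \<and> F x \<le> 1"
    and m1: "ndec {a<..} (\<lambda>x. F x / x powr -\<alpha>)" and m3: "ndec {a<..} (\<lambda>x. (1 - F x) / x powr -\<alpha>)"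
    and fin: "finite A" and sA: "\<forall>j\<in>A. ndec {a<..} (s j) \<and> (\<forall>x\<in>{a<..}. 0 \<le> s j x \<and> s j x \<le> 1)"
    and sL: "\<forall>j\<in>A \<inter> L. ndec {a<..} (\<lambda>x. s j x / F x) \<and> (\<forall>x\<in>{a<..}. s j x \<le> F x)"
    and n: "n = card (A \<inter> L)" and m: "1 \<le> m"
    and wint: "\<And>n' m'. 1 \<le> m' \<Longrightarrow> m' \<le> n' + 1 \<Longrightarrow> 0 < CC n' m' \<and> CC n' m' powr (-1/\<alpha>) \<in> {a<..}
       \<and> set_integrable lborel {a<..} (\<lambda>x. (x powr -\<alpha> - CC n' m') * (f x * (F x ^ n' * (x powr -\<alpha> / F x) ^ (m' - 1))))
       \<and> (LINT x:{a<..}|lborel. (x powr -\<alpha> - CC n' m') * (f x * (F x ^ n' * (x powr -\<alpha> / F x) ^ (m' - 1)))) = 0"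
    and fint: "set_integrable lborel {a<..} f" and fpos: "\<And>x. x \<in> {a<..} \<Longrightarrow> 0 \<le> f x"
    and meas: "(\<lambda>x. PB A (\<lambda>j. s j x) m * f x) \<in> borel_measurable lborel"
  shows "(LINT x:{a<..}|lborel. PB A (\<lambda>j. s j x) m * f x / x)
     \<le> (if m \<le> n + 1 then CC n m else CC 0 1) powr (1/\<alpha>) * (LINT x:{a<..}|lborel. PB A (\<lambda>j. s j x) m * f x)"
proof -
  define D where "D = {a<..}"
  define T where "T = (\<lambda>x::real. x powr -\<alpha>)"
  define G where "G = (\<lambda>x. PB A (\<lambda>j. s j x) m)"
  define h where "h = (\<lambda>x. G x * f x)"
  have Dm[measurable]: "D \<in> sets borel" unfolding D_def by simp
  have xpos: "\<And>x. x \<in> D \<Longrightarrow> 0 < x" unfolding D_def using a0 by auto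
  have Tpos: "\<And>x. x \<in> D \<Longrightarrow> 0 < T x"
  proof -
    fix x assume "x \<in> D" then have "0 < x" by (rule xpos)
    then show "0 < T x" unfolding T_def by simp
  qed
  have Gb: "\<And>x. x \<in> D \<Longrightarrow> 0 \<le> G x \<and> G x \<le> 1"
    unfolding G_def using fin sA D_def by (intro PB_bounds) auto
  have hmeas[measurable]: "h \<in> borel_measurable lborel" unfolding h_def G_def using meas by simp
  have hint: "set_integrable lborel D h"
  proof (rule set_integrable_bound[OF fint[folded D_def]])
    show "set_borel_measurable lborel D h" unfolding set_borel_measurable_def by measurable
    show "AE x in lborel. x \<in> D \<longrightarrow> norm (h x) \<le> norm (f x)"
    proof (rule AE_I2, rule impI)
      fix x assume x: "x \<in> D"
      then show "norm (h x) \<le> norm (f x)" using Gb[OF x] fpos[of x] unfolding h_def D_def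
        by (auto simp: abs_mult intro!: mult_left_le_one_le)
    qed
  qed
  have Tfint: "set_integrable lborel D (\<lambda>x. T x * f x)"
  proof -
    have w01: "set_integrable lborel D (\<lambda>x. (T x - CC 0 1) * (f x * (F x ^ 0 * (T x / F x) ^ (1 - 1))))"
      using wint[of 1 0] unfolding D_def T_def by auto
    then have "set_integrable lborel D (\<lambda>x. (T x - CC 0 1) * f x)" by simp
    then have "set_integrable lborel D (\<lambda>x. (T x - CC 0 1) * f x + CC 0 1 * f x)"
      using fint[folded D_def] by (intro set_integral_add) auto
    then show ?thesis by (simp add: algebra_simps)
  qed
  have Thint: "set_integrable lborel D (\<lambda>x. T x * h x)"
  proof (rule set_integrable_bound[OF Tfint])
    show "set_borel_measurable lborel D (\<lambda>x. T x * h x)" unfolding set_borel_measurable_def T_def by measurable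
    show "AE x in lborel. x \<in> D \<longrightarrow> norm (T x * h x) \<le> norm (T x * f x)"
    proof (rule AE_I2, rule impI)
      fix x assume x: "x \<in> D"
      have "\<bar>h x\<bar> \<le> \<bar>f x\<bar>" using Gb[OF x] fpos[of x] x unfolding h_def D_def
        by (auto simp: abs_mult intro!: mult_left_le_one_le)
      then show "norm (T x * h x) \<le> norm (T x * f x)" using Tpos[OF x] by (simp add: abs_mult)
    qed
  qed
  define C where "C = (if m \<le> n + 1 then CC n m else CC 0 1)"
  have K: "(LINT x:D|lborel. T x * h x) \<le> C * (LINT x:D|lborel. h x)"
  proof (cases "m \<le> n + 1")
    case True
    define Q where "Q = (\<lambda>x. F x ^ n * (T x / F x) ^ (m - 1))"
    have Qpos: "\<And>x. x \<in> D \<Longrightarrow> 0 < Q x" unfolding Q_def using FT Tpos D_def by auto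
    have W: "0 < CC n m \<and> CC n m powr (-1/\<alpha>) \<in> D
       \<and> set_integrable lborel D (\<lambda>x. (T x - CC n m) * (f x * Q x))
       \<and> (LINT x:D|lborel. (T x - CC n m) * (f x * Q x)) = 0"
      using wint[OF m True] unfolding D_def T_def Q_def by simp
    have m2: "ndec {a<..} (\<lambda>x. 1 / x powr -\<alpha>)"
      unfolding ndec_def using a0 \<alpha> by (auto simp: powr_minus divide_inverse intro!: powr_mono2)
    have inv: "\<forall>k\<ge>1. ndec {a<..} (\<lambda>x. PB A (\<lambda>j. s j x) k / (F x ^ card (A \<inter> L) * (x powr -\<alpha> / F x) ^ (k - 1)))"
      using FT a0 m1 m2 m3 fin sA sL
      by (intro PB_inv[where T="\<lambda>x. x powr -\<alpha>"]) auto
    have psi: "ndec D (\<lambda>x. G x / Q x)"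
      using inv m unfolding G_def Q_def D_def T_def n by auto
    define c0 where "c0 = CC n m powr (-1/\<alpha>)"
    have c0C: "c0 powr -\<alpha> = CC n m" unfolding c0_def using W \<alpha> by (simp add: powr_powr)
    have "(LINT x:D|lborel. T x * h x) \<le> CC n m * (LINT x:D|lborel. h x)"
    proof (rule cheb[OF hint Thint _ _ psi])
      show "set_integrable lborel D (\<lambda>x. (T x - CC n m) * (f x * Q x))" using W by simp
      show "(LINT x:D|lborel. (T x - CC n m) * (f x * Q x)) = 0" using W by simp
      show "c0 \<in> D" unfolding c0_def using W by simp
      fix x assume x: "x \<in> D"
      show "h x = G x / Q x * (f x * Q x) \<and> 0 \<le> f x * Q x"
        using Qpos[OF x] fpos[of x] x unfolding h_def D_def by simp
      show "x \<le> c0 \<Longrightarrow> CC n m \<le> T x"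
        unfolding T_def using c0C xpos[OF x] \<alpha> by (metis less_le_trans powr_mono2' neg_le_0_iff_le order_less_imp_le zero_less_one)
      show "c0 \<le> x \<Longrightarrow> T x \<le> CC n m"
      proof -
        assume "c0 \<le> x"
        moreover have "0 < c0" unfolding c0_def using W by simp
        ultimately show ?thesis unfolding T_def using c0C \<alpha> by (metis powr_mono2' neg_le_0_iff_le order_less_imp_le less_trans zero_less_one)
      qed
    qed
    then show ?thesis unfolding C_def using True by simp
  next
    case False
    have W: "0 < CC 0 1 \<and> CC 0 1 powr (-1/\<alpha>) \<in> D
       \<and> set_integrable lborel D (\<lambda>x. (T x - CC 0 1) * f x)
       \<and> (LINT x:D|lborel. (T x - CC 0 1) * f x) = 0"
      using wint[of 1 0] unfolding D_def T_def by simp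
    have psi: "ndec D G" unfolding G_def D_def using fin sA by (intro PB_ndec) auto
    define c0 where "c0 = CC 0 1 powr (-1/\<alpha>)"
    have c0C: "c0 powr -\<alpha> = CC 0 1" unfolding c0_def using W \<alpha> by (simp add: powr_powr)
    have "(LINT x:D|lborel. T x * h x) \<le> CC 0 1 * (LINT x:D|lborel. h x)"
    proof (rule cheb[OF hint Thint _ _ psi])
      show "set_integrable lborel D (\<lambda>x. (T x - CC 0 1) * f x)" using W by simp
      show "(LINT x:D|lborel. (T x - CC 0 1) * f x) = 0" using W by simp
      show "c0 \<in> D" unfolding c0_def using W by simp
      fix x assume x: "x \<in> D"
      show "h x = G x * f x \<and> 0 \<le> f x"
        using fpos[of x] x unfolding h_def D_def by simp
      show "x \<le> c0 \<Longrightarrow> CC 0 1 \<le> T x"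
        unfolding T_def using c0C xpos[OF x] \<alpha> by (metis less_le_trans powr_mono2' neg_le_0_iff_le order_less_imp_le zero_less_one)
      show "c0 \<le> x \<Longrightarrow> T x \<le> CC 0 1"
      proof -
        assume "c0 \<le> x"
        moreover have "0 < c0" unfolding c0_def using W by simp
        ultimately show ?thesis unfolding T_def using c0C \<alpha> by (metis powr_mono2' neg_le_0_iff_le order_less_imp_le less_trans zero_less_one)
      qed
    qed
    then show ?thesis unfolding C_def using False by simp
  qed
  have Cpos: "C > 0" unfolding C_def using wint[OF m] wint[of 1 0] by auto
  have "(LINT x:D|lborel. h x / x) \<le> C powr (1 / \<alpha>) * (LINT x:D|lborel. h x)"
  proof (rule young_step[OF \<alpha> Cpos hint Thint K])
    fix x assume x: "x \<in> D"
    have "T x powr (1 / \<alpha>) = x powr -1" unfolding T_def using \<alpha> xpos[OF x] by (simp add: powr_powr)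
    then show "0 \<le> h x \<and> 0 < T x \<and> 1 / x = T x powr (1 / \<alpha>)"
      using Tpos[OF x] Gb[OF x] fpos[of x] x xpos[OF x] unfolding h_def D_def by (simp add: powr_minus_divide)
  qed
  then show ?thesis unfolding h_def G_def D_def C_def .
qed

lemma convex_major:
  fixes \<phi> :: "real \<Rightarrow> real"
  assumes cv: "convex_on S \<phi>" and S: "p \<in> S" "r \<in> S"
    and o: "p \<le> q1" "q1 \<le> r" "p + r = q1 + q2"
  shows "\<phi> q1 + \<phi> q2 \<le> \<phi> p + \<phi> r"
proof (cases "p = r")
  case True
  then have "q1 = p" "q2 = p" using o by auto
  then show ?thesis using True by simp
next
  case False
  then have pr: "p < r" using o by simp
  define t where "t = (q1 - p) / (r - p)"
  have t: "0 \<le> t" "t \<le> 1" unfolding t_def using o pr by (auto simp: field_simps)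
  have tr: "t * (r - p) = q1 - p" unfolding t_def using pr by simp
  have q1: "q1 = (1 - t) *\<^sub>R p + t *\<^sub>R r" using tr by (simp add: algebra_simps)
  have q2: "q2 = (1 - (1 - t)) *\<^sub>R p + (1 - t) *\<^sub>R r" using tr o by (simp add: algebra_simps)
  have "\<phi> q1 \<le> (1 - t) * \<phi> p + t * \<phi> r" unfolding q1 using convex_onD[OF cv] t S by simp
  moreover have "\<phi> q2 \<le> (1 - (1 - t)) * \<phi> p + (1 - t) * \<phi> r" unfolding q2 using convex_onD[OF cv, of "1 - t"] t S by simp
  ultimately show ?thesis by (simp add: algebra_simps)
qed

lemma tp2:
  fixes \<phi> F :: "real \<Rightarrow> real"
  assumes cvx: "convex_on {a<..} \<phi>" and Fe: "\<And>t. a < t \<Longrightarrow> F t = exp (- \<phi> t)"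
    and F0: "\<And>t. t \<le> a \<Longrightarrow> F t = 0"
    and xy: "a < x" "x \<le> y" "0 \<le> \<delta>"
  shows "F (x - \<delta>) * F y \<le> F (y - \<delta>) * F x"
proof -
  have Fnn: "0 \<le> F t" for t by (cases "a < t") (auto simp: Fe F0)
  show ?thesis
  proof (cases "x - \<delta> \<le> a")
    case True
    then show ?thesis using F0[OF True] Fnn by simp
  next
    case False
    then have p: "a < x - \<delta>" "a < y - \<delta>" "a < y" using xy by auto
    have "\<phi> x + \<phi> (y - \<delta>) \<le> \<phi> (x - \<delta>) + \<phi> y"
      using p xy by (intro convex_major[OF cvx]) auto
    then have "exp (- \<phi> (x - \<delta>)) * exp (- \<phi> y) \<le> exp (- \<phi> (y - \<delta>)) * exp (- \<phi> x)"
      by (simp add: exp_add[symmetric])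
    then show ?thesis using p xy by (simp add: Fe)
  qed
qed

lemma tp2_ndec:
  fixes \<phi> F :: "real \<Rightarrow> real"
  assumes cvx: "convex_on {a<..} \<phi>" and Fe: "\<And>t. a < t \<Longrightarrow> F t = exp (- \<phi> t)"
    and F0: "\<And>t. t \<le> a \<Longrightarrow> F t = 0" and d: "0 \<le> \<delta>"
  shows "ndec {a<..} (\<lambda>x. F (x - \<delta>) / F x)"
  unfolding ndec_def
proof (intro ballI impI)
  fix x y assume x: "x \<in> {a<..}" and y: "y \<in> {a<..}" and xy: "x \<le> y"
  have Fx: "F x > 0" "F y > 0" using x y by (auto simp: Fe)
  have "F (x - \<delta>) * F y \<le> F (y - \<delta>) * F x" using x xy d by (intro tp2[OF cvx Fe F0]) auto
  then show "F (x - \<delta>) / F x \<le> F (y - \<delta>) / F y" using Fx by (simp add: field_simps)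
qed

lemma frechet_cdf_pos: "x > 0 \<Longrightarrow> frechet_cdf \<alpha> x = exp (- (x powr -\<alpha>))"
  unfolding frechet_cdf_def by simp

lemma frechet_cdf_bounds: "0 \<le> frechet_cdf \<alpha> x \<and> frechet_cdf \<alpha> x \<le> 1"
  unfolding frechet_cdf_def by auto

lemma frechet_cdf_mono:
  assumes "\<alpha> > 0" "x \<le> y" shows "frechet_cdf \<alpha> x \<le> frechet_cdf \<alpha> y"
proof (cases "x > 0")
  case True
  then have "y powr -\<alpha> \<le> x powr -\<alpha>" using assms by (intro powr_mono2') auto
  then show ?thesis using True assms unfolding frechet_cdf_def by auto
next
  case False
  then show ?thesis unfolding frechet_cdf_def by auto
qed

lemma powr_neg_convex:
  assumes "\<alpha> > 0" shows "convex_on {0<..} (\<lambda>t::real. t powr -\<alpha>)"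
proof (rule convex_on_realI[where f'="\<lambda>t. -\<alpha> * t powr (-\<alpha> - 1)"])
  show "connected {0::real<..}" by simp
  fix x :: real assume "x \<in> {0<..}"
  then show "((\<lambda>t. t powr -\<alpha>) has_real_derivative -\<alpha> * x powr (-\<alpha> - 1)) (at x)"
    using has_real_derivative_powr[of x "-\<alpha>"] by simp
next
  fix x y :: real assume "x \<in> {0<..}" "y \<in> {0<..}" "x \<le> y"
  then have "y powr (-\<alpha> - 1) \<le> x powr (-\<alpha> - 1)" using assms by (intro powr_mono2') auto
  then show "-\<alpha> * x powr (-\<alpha> - 1) \<le> -\<alpha> * y powr (-\<alpha> - 1)" using assms by simp
qed

lemma frechet_ratio_ndec:
  assumes "\<alpha> > 0" "0 \<le> \<delta>"
  shows "ndec {0<..} (\<lambda>x. frechet_cdf \<alpha> (x - \<delta>) / frechet_cdf \<alpha> x)"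
  using assms by (intro tp2_ndec[OF powr_neg_convex]) (auto simp: frechet_cdf_def)

lemma one_minus_exp_ratio:
  fixes u v :: real assumes "0 < u" "u \<le> v"
  shows "(1 - exp (- v)) / v \<le> (1 - exp (- u)) / u"
proof -
  define t where "t = u / v"
  have t: "0 \<le> t" "t \<le> 1" unfolding t_def using assms by auto
  have "exp ((1 - t) *\<^sub>R 0 + t *\<^sub>R (- v)) \<le> (1 - t) * exp 0 + t * exp (- v)"
    using convex_onD[OF exp_convex, of t 0 "-v"] t by simp
  moreover have "(1 - t) *\<^sub>R 0 + t *\<^sub>R (- v) = - u" unfolding t_def using assms by simp
  ultimately have "exp (- u) \<le> 1 - t + t * exp (- v)" by simp
  then have "t * (1 - exp (- v)) \<le> 1 - exp (- u)" by (simp add: algebra_simps)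
  then show ?thesis unfolding t_def using assms by (simp add: field_simps)
qed

lemma frechet_m3:
  assumes "\<alpha> > 0"
  shows "ndec {0<..} (\<lambda>x. (1 - frechet_cdf \<alpha> x) / x powr -\<alpha>)"
  unfolding ndec_def
proof (intro ballI impI)
  fix x y :: real assume x: "x \<in> {0<..}" and y: "y \<in> {0<..}" and xy: "x \<le> y"
  have "y powr -\<alpha> \<le> x powr -\<alpha>" using x xy assms by (intro powr_mono2') auto
  moreover have "0 < y powr -\<alpha>" using y by simp
  ultimately have "(1 - exp (- (x powr -\<alpha>))) / x powr -\<alpha> \<le> (1 - exp (- (y powr -\<alpha>))) / y powr -\<alpha>"
    by (intro one_minus_exp_ratio) auto
  then show "(1 - frechet_cdf \<alpha> x) / x powr -\<alpha> \<le> (1 - frechet_cdf \<alpha> y) / y powr -\<alpha>"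
    using x y by (simp add: frechet_cdf_pos)
qed

lemma frechet_m1:
  assumes "\<alpha> > 0"
  shows "ndec {0<..} (\<lambda>x. frechet_cdf \<alpha> x / x powr -\<alpha>)"
proof -
  have "ndec {0<..} (\<lambda>x. frechet_cdf \<alpha> x * x powr \<alpha>)"
  proof (rule ndec_mult)
    show "ndec {0<..} (frechet_cdf \<alpha>)" unfolding ndec_def using assms frechet_cdf_mono by auto
    show "ndec {0<..} (\<lambda>x. x powr \<alpha>)" unfolding ndec_def using assms by (auto intro!: powr_mono2)
    fix x :: real assume "x \<in> {0<..}" then show "0 \<le> frechet_cdf \<alpha> x \<and> 0 \<le> x powr \<alpha>"
      using frechet_cdf_bounds by auto
  qed
  then show ?thesis by (rule ndec_cong) (simp add: powr_minus divide_inverse)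
qed

lemma frechet_pdf_cont: "0 < (x::real) \<Longrightarrow> isCont (\<lambda>x. \<alpha> * x powr (-(\<alpha>+1)) * exp (- (x powr -\<alpha>))) x"
  by (intro continuous_intros) auto

lemma frechet_cdf_deriv:
  fixes x \<alpha> :: real
  assumes x0: "0 < x"
  shows "DERIV (\<lambda>x. exp (- (x powr -\<alpha>))) x :> \<alpha> * x powr (-(\<alpha>+1)) * exp (- (x powr -\<alpha>))"
proof -
  have "DERIV (\<lambda>x. x powr -\<alpha>) x :> -\<alpha> * x powr (-\<alpha> - 1)" using has_real_derivative_powr[OF x0] .
  from DERIV_chain2[OF DERIV_exp DERIV_minus[OF this]]
  have "DERIV (\<lambda>x. exp (- (x powr -\<alpha>))) x :> exp (- (x powr -\<alpha>)) * - (- \<alpha> * x powr (- \<alpha> - 1))" .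
  moreover have "x powr (- \<alpha> - 1) = x powr (-(\<alpha>+1))" by (simp only: minus_add_distrib diff_conv_add_uminus)
  moreover have "\<And>E a P :: real. E * - (- a * P) = a * P * E" by simp
  ultimately show ?thesis by metis
qed

lemma frechet_fint:
  assumes "\<alpha> > 0"
  shows "set_integrable lborel {0<..} (frechet_pdf \<alpha>)"
proof -
  have "set_integrable lborel (einterval 0 \<infinity>) (\<lambda>x. \<alpha> * x powr (-(\<alpha>+1)) * exp (- (x powr -\<alpha>)))"
  proof (rule interval_integral_FTC_nonneg(1)[where F="\<lambda>x. exp (- (x powr -\<alpha>))" and A=0 and B=1])
    show "(0::ereal) < \<infinity>" by simp
    fix x assume x: "0 < ereal x" "ereal x < \<infinity>"
    then have x0: "0 < x" by simp
    show "DERIV (\<lambda>x. exp (- (x powr -\<alpha>))) x :> \<alpha> * x powr (-(\<alpha>+1)) * exp (- (x powr -\<alpha>))"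
      by (rule frechet_cdf_deriv[OF x0])
    show "isCont (\<lambda>x. \<alpha> * x powr (-(\<alpha>+1)) * exp (- (x powr -\<alpha>))) x" by (rule frechet_pdf_cont[OF x0])
  next
    show "AE x in lborel. 0 < ereal x \<longrightarrow> ereal x < \<infinity> \<longrightarrow> 0 \<le> \<alpha> * x powr (-(\<alpha>+1)) * exp (- (x powr -\<alpha>))"
      using assms by auto
    have "((\<lambda>x. exp (- (x powr -\<alpha>))) \<longlongrightarrow> 0) (at_right 0)"
    proof -
      have "filterlim (\<lambda>x::real. - (x powr -\<alpha>)) at_bot (at_right 0)"
        using powr_m_at_right0[OF assms] by (simp add: filterlim_uminus_at_top)
      then show ?thesis by (rule filterlim_compose[OF exp_at_bot])
    qed
    then show "(((\<lambda>x. exp (- (x powr -\<alpha>))) \<circ> real_of_ereal) \<longlongrightarrow> 0) (at_right 0)"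
      by (simp add: zero_ereal_def ereal_tendsto_simps1)
    have "((\<lambda>x::real. x powr -\<alpha>) \<longlongrightarrow> 0) at_top"
      using assms by (intro tendsto_neg_powr filterlim_ident) auto
    then have "((\<lambda>x. exp (- (x powr -\<alpha>))) \<longlongrightarrow> exp (- 0)) at_top" by (intro tendsto_intros)
    then show "(((\<lambda>x. exp (- (x powr -\<alpha>))) \<circ> real_of_ereal) \<longlongrightarrow> 1) (at_left \<infinity>)"
      by (simp add: ereal_tendsto_simps1)
  qed
  then show ?thesis
    by (subst set_integrable_cong[where f'="\<lambda>x. \<alpha> * x powr (-(\<alpha>+1)) * exp (- (x powr -\<alpha>))"]) (auto simp: frechet_pdf_def zero_ereal_def)
qed

lemma frechet_wint:
  assumes a: "\<alpha> > 0" and m: "1 \<le> m'" "m' \<le> n' + 1"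
  defines "CC \<equiv> real m' / real (n' + 2 - m')"
  shows "0 < CC \<and> CC powr (-1/\<alpha>) \<in> {0<..}
       \<and> set_integrable lborel {0<..} (\<lambda>x. (x powr -\<alpha> - CC) * (frechet_pdf \<alpha> x * (frechet_cdf \<alpha> x ^ n' * (x powr -\<alpha> / frechet_cdf \<alpha> x) ^ (m' - 1))))
       \<and> (LINT x:{0<..}|lborel. (x powr -\<alpha> - CC) * (frechet_pdf \<alpha> x * (frechet_cdf \<alpha> x ^ n' * (x powr -\<alpha> / frechet_cdf \<alpha> x) ^ (m' - 1)))) = 0"
proof -
  have C: "0 < CC" unfolding CC_def using m by simp
  have eq: "\<And>x. x \<in> {0<..} \<Longrightarrow> (x powr -\<alpha> - CC) * (frechet_pdf \<alpha> x * (frechet_cdf \<alpha> x ^ n' * (x powr -\<alpha> / frechet_cdf \<alpha> x) ^ (m' - 1)))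
     = (x powr -\<alpha> - CC) * wF \<alpha> n' m' x"
    by (simp add: frechet_pdf_def frechet_cdf_def wF_def mult.assoc)
  have ftc: "set_integrable lborel {0<..} (\<lambda>x. (x powr -\<alpha> - CC) * wF \<alpha> n' m' x)
     \<and> (LINT x:{0<..}|lborel. (x powr -\<alpha> - CC) * wF \<alpha> n' m' x) = 0"
    unfolding CC_def by (rule frechet_ftc[OF a m])
  have e2: "(LINT x:{0<..}|lborel. (x powr -\<alpha> - CC) * (frechet_pdf \<alpha> x * (frechet_cdf \<alpha> x ^ n' * (x powr -\<alpha> / frechet_cdf \<alpha> x) ^ (m' - 1))))
     = (LINT x:{0<..}|lborel. (x powr -\<alpha> - CC) * wF \<alpha> n' m' x)"
    using eq by (intro set_lebesgue_integral_cong) auto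
  have i: "set_integrable lborel {0<..} (\<lambda>x. (x powr -\<alpha> - CC) * (frechet_pdf \<alpha> x * (frechet_cdf \<alpha> x ^ n' * (x powr -\<alpha> / frechet_cdf \<alpha> x) ^ (m' - 1))))"
    by (rule iffD2[OF set_integrable_cong[OF refl refl eq] conjunct1[OF ftc]])
  have c0: "CC powr (-1/\<alpha>) \<in> {0<..}" using C by (simp only: greaterThan_iff powr_gt_zero)
  have z: "(LINT x:{0<..}|lborel. (x powr -\<alpha> - CC) * (frechet_pdf \<alpha> x * (frechet_cdf \<alpha> x ^ n' * (x powr -\<alpha> / frechet_cdf \<alpha> x) ^ (m' - 1)))) = 0"
    using e2 conjunct2[OF ftc] by (rule trans)
  show ?thesis using C c0 i z by blast
qed

lemma pareto_cdf_pos: "x \<ge> 1 \<Longrightarrow> pareto_cdf \<alpha> x = 1 - x powr -\<alpha>"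
  unfolding pareto_cdf_def by simp

lemma pareto_cdf_bounds:
  assumes "\<alpha> > 0" shows "0 \<le> pareto_cdf \<alpha> x \<and> pareto_cdf \<alpha> x \<le> 1"
proof (cases "x \<ge> 1")
  case True
  then have "x powr -\<alpha> \<le> 1 powr -\<alpha>" using assms by (intro powr_mono2') auto
  then show ?thesis using True unfolding pareto_cdf_def by simp
next
  case False then show ?thesis unfolding pareto_cdf_def by simp
qed

lemma pareto_cdf_gt0: assumes "\<alpha> > 0" "x > 1" shows "0 < pareto_cdf \<alpha> x"
proof -
  have "x powr -\<alpha> < 1 powr -\<alpha>" using assms by (intro powr_less_mono2_neg) auto
  then show ?thesis using assms unfolding pareto_cdf_def by simp
qed

lemma pareto_cdf_mono:
  assumes "\<alpha> > 0" "x \<le> y" shows "pareto_cdf \<alpha> x \<le> pareto_cdf \<alpha> y"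
proof (cases "x \<ge> 1")
  case True
  then have "y powr -\<alpha> \<le> x powr -\<alpha>" using assms by (intro powr_mono2') auto
  then show ?thesis using True assms unfolding pareto_cdf_def by auto
next
  case False
  then show ?thesis using pareto_cdf_bounds[OF assms(1), of y] unfolding pareto_cdf_def by auto
qed

lemma pareto_P_expr:
  fixes t \<alpha> :: real assumes a: "\<alpha> > 0" and t: "t > 1"
  shows "t powr (-\<alpha> - 1) / (1 - t powr -\<alpha>) = 1 / (t powr (\<alpha> + 1) - t)"
proof -
  define A where "A = t powr \<alpha>"
  have A1: "A > 1" unfolding A_def using a t by (simp add: gr_one_powr)
  have e1: "t powr -\<alpha> = 1 / A" unfolding A_def by (simp add: powr_minus_divide)
  have e2: "t powr (\<alpha> + 1) = A * t" unfolding A_def using t by (simp add: powr_add)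
  have e3: "t powr (-\<alpha> - 1) = 1 / (A * t)"
  proof -
    have "-\<alpha> - 1 = - (\<alpha> + 1)" by simp
    then have "t powr (-\<alpha> - 1) = 1 / t powr (\<alpha> + 1)" by (simp only: powr_minus_divide)
    then show ?thesis using e2 by simp
  qed
  show ?thesis unfolding e1 e2 e3 using A1 t by (simp add: field_simps)
qed

lemma pareto_phi_convex:
  assumes a: "\<alpha> > 0"
  shows "convex_on {1<..} (\<lambda>t::real. - ln (1 - t powr -\<alpha>))"
proof (rule convex_on_realI[where f'="\<lambda>t. - (\<alpha> * (1 / (t powr (\<alpha> + 1) - t)))"])
  show "connected {1::real<..}" by simp
next
  fix x :: real assume x: "x \<in> {1<..}"
  then have x1: "x > 1" by simp
  have g: "0 < 1 - x powr -\<alpha>" using pareto_cdf_gt0[OF a x1] x1 by (simp add: pareto_cdf_pos)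
  have d1: "DERIV (\<lambda>t. t powr -\<alpha>) x :> -\<alpha> * x powr (-\<alpha> - 1)" using has_real_derivative_powr[of x "-\<alpha>"] x1 by simp
  have d2: "DERIV (\<lambda>t. 1 - t powr -\<alpha>) x :> 0 - -\<alpha> * x powr (-\<alpha> - 1)" by (rule DERIV_diff[OF DERIV_const d1])
  have d3: "DERIV (\<lambda>t. ln (1 - t powr -\<alpha>)) x :> inverse (1 - x powr -\<alpha>) * (0 - -\<alpha> * x powr (-\<alpha> - 1))"
    by (rule DERIV_chain2[OF DERIV_ln[OF g] d2])
  have d4: "DERIV (\<lambda>t. - ln (1 - t powr -\<alpha>)) x :> - (inverse (1 - x powr -\<alpha>) * (0 - -\<alpha> * x powr (-\<alpha> - 1)))"
    by (rule DERIV_minus[OF d3])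
  have "inverse (1 - x powr -\<alpha>) * (0 - -\<alpha> * x powr (-\<alpha> - 1)) = \<alpha> * (x powr (-\<alpha> - 1) / (1 - x powr -\<alpha>))"
    by (simp add: divide_inverse)
  also have "\<dots> = \<alpha> * (1 / (x powr (\<alpha> + 1) - x))" using pareto_P_expr[OF a x1] by simp
  finally show "((\<lambda>t. - ln (1 - t powr -\<alpha>)) has_real_derivative - (\<alpha> * (1 / (x powr (\<alpha> + 1) - x)))) (at x)"
    using d4 by simp
next
  fix x y :: real assume x: "x \<in> {1<..}" and y: "y \<in> {1<..}" and xy: "x \<le> y"
  have x1: "x > 1" and y1: "y > 1" using x y by auto
  have xa: "x powr \<alpha> \<ge> 1" using x1 a by (simp add: ge_one_powr_ge_zero)
  have px: "x powr (\<alpha> + 1) = x powr \<alpha> * x" using x1 by (simp add: powr_add)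
  have py: "y powr (\<alpha> + 1) = y powr \<alpha> * y" using y1 by (simp add: powr_add)
  have yx: "x powr \<alpha> \<le> y powr \<alpha>" using x1 xy a by (intro powr_mono2) auto
  have pos: "0 < x powr (\<alpha> + 1) - x"
  proof -
    have "x powr \<alpha> > 1" using x1 a by (simp add: gr_one_powr)
    then have "x powr \<alpha> * x > 1 * x" using x1 by (intro mult_strict_right_mono) auto
    then show ?thesis using px by simp
  qed
  have mono: "x powr (\<alpha> + 1) - x \<le> y powr (\<alpha> + 1) - y"
  proof -
    have "y * x powr \<alpha> \<le> y * y powr \<alpha>" using yx y1 by (intro mult_left_mono) auto
    moreover have "(y - x) * 1 \<le> (y - x) * x powr \<alpha>" using xa xy by (intro mult_left_mono) auto
    ultimately show ?thesis unfolding px py by (simp add: algebra_simps)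
  qed
  have "1 / (y powr (\<alpha> + 1) - y) \<le> 1 / (x powr (\<alpha> + 1) - x)"
    using pos mono by (intro divide_left_mono) auto
  then have "\<alpha> * (1 / (y powr (\<alpha> + 1) - y)) \<le> \<alpha> * (1 / (x powr (\<alpha> + 1) - x))"
    using a by (intro mult_left_mono) auto
  then show "- (\<alpha> * (1 / (x powr (\<alpha> + 1) - x))) \<le> - (\<alpha> * (1 / (y powr (\<alpha> + 1) - y)))"
    by linarith
qed

lemma pareto_ratio_ndec:
  assumes "\<alpha> > 0" "0 \<le> \<delta>"
  shows "ndec {1<..} (\<lambda>x. pareto_cdf \<alpha> (x - \<delta>) / pareto_cdf \<alpha> x)"
proof (rule tp2_ndec[OF pareto_phi_convex[OF assms(1)] _ _ assms(2)])
  fix t :: real assume t: "1 < t"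
  have "0 < 1 - t powr -\<alpha>" using pareto_cdf_gt0[OF assms(1) t] t by (simp add: pareto_cdf_pos)
  then show "pareto_cdf \<alpha> t = exp (- (- ln (1 - t powr -\<alpha>)))" using t by (simp add: pareto_cdf_pos)
next
  fix t :: real assume "t \<le> 1"
  then show "pareto_cdf \<alpha> t = 0" unfolding pareto_cdf_def by auto
qed

lemma pareto_m1:
  assumes "\<alpha> > 0"
  shows "ndec {1<..} (\<lambda>x. pareto_cdf \<alpha> x / x powr -\<alpha>)"
proof -
  have "ndec {1<..} (\<lambda>x. pareto_cdf \<alpha> x * x powr \<alpha>)"
  proof (rule ndec_mult)
    show "ndec {1<..} (pareto_cdf \<alpha>)" unfolding ndec_def using assms pareto_cdf_mono by auto
    show "ndec {1<..} (\<lambda>x. x powr \<alpha>)" unfolding ndec_def using assms by (auto intro!: powr_mono2)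
    fix x :: real assume "x \<in> {1<..}" then show "0 \<le> pareto_cdf \<alpha> x \<and> 0 \<le> x powr \<alpha>"
      using pareto_cdf_bounds[OF assms] by auto
  qed
  then show ?thesis by (rule ndec_cong) (simp add: powr_minus divide_inverse)
qed

lemma pareto_m3:
  assumes "\<alpha> > 0"
  shows "ndec {1<..} (\<lambda>x. (1 - pareto_cdf \<alpha> x) / x powr -\<alpha>)"
proof -
  have "ndec {1<..} (\<lambda>x. 1)" by (rule ndec_const)
  then show ?thesis
  proof (rule ndec_cong)
    fix x :: real assume "x \<in> {1<..}"
    then have "x > 0" "x \<ge> 1" by auto
    then show "1 = (1 - pareto_cdf \<alpha> x) / x powr -\<alpha>" by (simp add: pareto_cdf_pos)
  qed
qed

lemma pareto_pdf_cont: "1 < (x::real) \<Longrightarrow> isCont (\<lambda>x. \<alpha> * x powr (-(\<alpha>+1))) x"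
  by (intro continuous_intros) auto

lemma pareto_cdf_deriv:
  fixes x \<alpha> :: real
  assumes x0: "0 < x"
  shows "DERIV (\<lambda>x. - (x powr -\<alpha>)) x :> \<alpha> * x powr (-(\<alpha>+1))"
proof -
  have "DERIV (\<lambda>x. x powr -\<alpha>) x :> -\<alpha> * x powr (-\<alpha> - 1)" using has_real_derivative_powr[OF x0] .
  from DERIV_minus[OF this]
  have "DERIV (\<lambda>x. - (x powr -\<alpha>)) x :> - (-\<alpha> * x powr (-\<alpha> - 1))" .
  moreover have "x powr (- \<alpha> - 1) = x powr (-(\<alpha>+1))" by (simp only: minus_add_distrib diff_conv_add_uminus)
  moreover have "\<And>a P :: real. - (- a * P) = a * P" by simp
  ultimately show ?thesis by metis
qed

lemma pareto_fint:
  assumes a: "\<alpha> > 0"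
  shows "set_integrable lborel {1<..} (pareto_pdf \<alpha>)"
proof -
  have "set_integrable lborel (einterval 1 \<infinity>) (\<lambda>x. \<alpha> * x powr (-(\<alpha>+1)))"
  proof (rule interval_integral_FTC_nonneg(1)[where F="\<lambda>x. - (x powr -\<alpha>)" and A="-1" and B=0])
    show "(1::ereal) < \<infinity>" by simp
    fix x assume x: "1 < ereal x" "ereal x < \<infinity>"
    then have x0: "0 < x" "1 < x" by auto
    show "DERIV (\<lambda>x. - (x powr -\<alpha>)) x :> \<alpha> * x powr (-(\<alpha>+1))"
      by (rule pareto_cdf_deriv[OF x0(1)])
    show "isCont (\<lambda>x. \<alpha> * x powr (-(\<alpha>+1))) x" by (rule pareto_pdf_cont[OF x0(2)])
  next
    show "AE x in lborel. 1 < ereal x \<longrightarrow> ereal x < \<infinity> \<longrightarrow> 0 \<le> \<alpha> * x powr (-(\<alpha>+1))"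
      using a by auto
    have "((\<lambda>x::real. - (x powr -\<alpha>)) \<longlongrightarrow> - (1 powr -\<alpha>)) (at_right 1)"
      by (intro tendsto_intros) auto
    then show "(((\<lambda>x. - (x powr -\<alpha>)) \<circ> real_of_ereal) \<longlongrightarrow> -1) (at_right 1)"
      by (simp add: one_ereal_def ereal_tendsto_simps1)
    have "((\<lambda>x::real. x powr -\<alpha>) \<longlongrightarrow> 0) at_top"
      using a by (intro tendsto_neg_powr filterlim_ident) auto
    then have "((\<lambda>x::real. - (x powr -\<alpha>)) \<longlongrightarrow> - 0) at_top" by (intro tendsto_intros)
    then show "(((\<lambda>x. - (x powr -\<alpha>)) \<circ> real_of_ereal) \<longlongrightarrow> 0) (at_left \<infinity>)"
      by (simp add: ereal_tendsto_simps1)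
  qed
  then have i: "set_integrable lborel {1<..} (\<lambda>x. \<alpha> * x powr (-(\<alpha>+1)))"
    by (simp add: one_ereal_def)
  have eq: "\<And>x. x \<in> {1<..} \<Longrightarrow> pareto_pdf \<alpha> x = \<alpha> * x powr (-(\<alpha>+1))"
    by (simp add: pareto_pdf_def)
  show ?thesis by (rule iffD2[OF set_integrable_cong[OF refl refl eq] i])
qed

lemma pareto_wint:
  assumes a: "\<alpha> > 0" and m: "1 \<le> m'" "m' \<le> n' + 1"
  defines "CC \<equiv> real m' / real (n' + 2)"
  shows "0 < CC \<and> CC powr (-1/\<alpha>) \<in> {1<..}
       \<and> set_integrable lborel {1<..} (\<lambda>x. (x powr -\<alpha> - CC) * (pareto_pdf \<alpha> x * (pareto_cdf \<alpha> x ^ n' * (x powr -\<alpha> / pareto_cdf \<alpha> x) ^ (m' - 1))))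
       \<and> (LINT x:{1<..}|lborel. (x powr -\<alpha> - CC) * (pareto_pdf \<alpha> x * (pareto_cdf \<alpha> x ^ n' * (x powr -\<alpha> / pareto_cdf \<alpha> x) ^ (m' - 1)))) = 0"
proof -
  have C: "0 < CC" "CC < 1" unfolding CC_def using m by auto
  have eq: "\<And>x. x \<in> {1<..} \<Longrightarrow> (x powr -\<alpha> - CC) * (pareto_pdf \<alpha> x * (pareto_cdf \<alpha> x ^ n' * (x powr -\<alpha> / pareto_cdf \<alpha> x) ^ (m' - 1)))
     = (x powr -\<alpha> - CC) * wP \<alpha> n' m' x"
    by (simp add: pareto_pdf_def pareto_cdf_def wP_def mult.assoc)
  have ftc: "set_integrable lborel {1<..} (\<lambda>x. (x powr -\<alpha> - CC) * wP \<alpha> n' m' x)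
     \<and> (LINT x:{1<..}|lborel. (x powr -\<alpha> - CC) * wP \<alpha> n' m' x) = 0"
    unfolding CC_def by (rule pareto_ftc[OF a m])
  have e2: "(LINT x:{1<..}|lborel. (x powr -\<alpha> - CC) * (pareto_pdf \<alpha> x * (pareto_cdf \<alpha> x ^ n' * (x powr -\<alpha> / pareto_cdf \<alpha> x) ^ (m' - 1))))
     = (LINT x:{1<..}|lborel. (x powr -\<alpha> - CC) * wP \<alpha> n' m' x)"
    using eq by (intro set_lebesgue_integral_cong) auto
  have i: "set_integrable lborel {1<..} (\<lambda>x. (x powr -\<alpha> - CC) * (pareto_pdf \<alpha> x * (pareto_cdf \<alpha> x ^ n' * (x powr -\<alpha> / pareto_cdf \<alpha> x) ^ (m' - 1))))"
    by (rule iffD2[OF set_integrable_cong[OF refl refl eq] conjunct1[OF ftc]])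
  have c0: "CC powr (-1/\<alpha>) \<in> {1<..}"
  proof -
    have "1 powr (-1/\<alpha>) < CC powr (-1/\<alpha>)" using C a by (intro powr_less_mono2_neg) auto
    then show ?thesis by simp
  qed
  have z: "(LINT x:{1<..}|lborel. (x powr -\<alpha> - CC) * (pareto_pdf \<alpha> x * (pareto_cdf \<alpha> x ^ n' * (x powr -\<alpha> / pareto_cdf \<alpha> x) ^ (m' - 1)))) = 0"
    using e2 conjunct2[OF ftc] by (rule trans)
  show ?thesis using C c0 i z by blast
qed

lemma shift_int:
  fixes k :: "real \<Rightarrow> real"
  shows "(LINT z:{c - l..}|lborel. k (z + l)) = (LINT x:{c..}|lborel. k x)"
proof -
  have "(LINT x:{c..}|lborel. k x) = integral\<^sup>L lborel (\<lambda>x. indicator {c..} x *\<^sub>R k x)"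
    by (simp add: set_lebesgue_integral_def)
  also have "\<dots> = \<bar>1\<bar> *\<^sub>R (\<integral>x. indicator {c..} (l + 1 * x) *\<^sub>R k (l + 1 * x) \<partial>lborel)"
    by (rule lborel_integral_real_affine) simp
  also have "(\<lambda>x. indicator {c..} (l + 1 * x) *\<^sub>R k (l + 1 * x)) = (\<lambda>z. indicator {c - l..} z *\<^sub>R k (z + l))"
    by (auto simp: fun_eq_iff indicator_def algebra_simps)
  finally show ?thesis by (simp add: set_lebesgue_integral_def)
qed

lemma point_int:
  fixes k :: "real \<Rightarrow> real"
  assumes [measurable]: "k \<in> borel_measurable lborel"
  shows "(LINT x:{c..}|lborel. k x) = (LINT x:{c<..}|lborel. k x)"
  unfolding set_lebesgue_integral_def
proof (rule integral_cong_AE)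
  show "(\<lambda>x. indicat_real {c..} x *\<^sub>R k x) \<in> borel_measurable lborel" by measurable
  show "(\<lambda>x. indicat_real {c<..} x *\<^sub>R k x) \<in> borel_measurable lborel" by measurable
  show "AE x in lborel. indicat_real {c..} x *\<^sub>R k x = indicat_real {c<..} x *\<^sub>R k x"
    using AE_lborel_singleton[of c] by eventually_elim (auto simp: indicator_def)
qed

lemma phi_J_repr:
  fixes F f :: "real \<Rightarrow> real"
  assumes m: "1 \<le> m" and [measurable]: "F \<in> borel_measurable borel" "f \<in> borel_measurable borel"
  shows "phi_gen F f \<nu> d m lam i = (LINT x:{\<nu><..}|lborel. PB ({..<d} - {i}) (\<lambda>j. F (x - lam i + lam j)) m * f x)"
    and "J_gen F f \<nu> d m lam i = (LINT x:{\<nu><..}|lborel. PB ({..<d} - {i}) (\<lambda>j. F (x - lam i + lam j)) m * f x / x)"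
proof -
  have tw: "\<And>z. topm_weight F d m lam i z = PB ({..<d} - {i}) (\<lambda>j. F (z + lam i - lam i + lam j)) m"
    using topm_eq[OF m] by simp
  have "phi_gen F f \<nu> d m lam i = (LINT z:{\<nu> - lam i..}|lborel. (\<lambda>x. PB ({..<d} - {i}) (\<lambda>j. F (x - lam i + lam j)) m * f x) (z + lam i))"
    unfolding phi_gen_def tw by simp
  also have "\<dots> = (LINT x:{\<nu>..}|lborel. PB ({..<d} - {i}) (\<lambda>j. F (x - lam i + lam j)) m * f x)"
    by (rule shift_int)
  also have "\<dots> = (LINT x:{\<nu><..}|lborel. PB ({..<d} - {i}) (\<lambda>j. F (x - lam i + lam j)) m * f x)"
    by (rule point_int) measurable
  finally show "phi_gen F f \<nu> d m lam i = (LINT x:{\<nu><..}|lborel. PB ({..<d} - {i}) (\<lambda>j. F (x - lam i + lam j)) m * f x)" .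
  have "J_gen F f \<nu> d m lam i = (LINT z:{\<nu> - lam i..}|lborel. (\<lambda>x. PB ({..<d} - {i}) (\<lambda>j. F (x - lam i + lam j)) m * f x / x) (z + lam i))"
    unfolding J_gen_def tw by simp
  also have "\<dots> = (LINT x:{\<nu>..}|lborel. PB ({..<d} - {i}) (\<lambda>j. F (x - lam i + lam j)) m * f x / x)"
    by (rule shift_int)
  also have "\<dots> = (LINT x:{\<nu><..}|lborel. PB ({..<d} - {i}) (\<lambda>j. F (x - lam i + lam j)) m * f x / x)"
    by (rule point_int) measurable
  finally show "J_gen F f \<nu> d m lam i = (LINT x:{\<nu><..}|lborel. PB ({..<d} - {i}) (\<lambda>j. F (x - lam i + lam j)) m * f x / x)" .
qed

theorem lemma3:
  fixes \<alpha> :: real and d m i \<sigma> :: nat and lam :: "nat \<Rightarrow> real" and \<pi> :: "nat \<Rightarrow> nat"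
  assumes "1 \<le> m" and "m \<le> d"
    and "\<alpha> > 1"
    and "\<forall>j<d. lam j \<ge> 0"
    and "i < d"
    and "bij_betw \<pi> {..<d} {1..d}"
    and "\<forall>j<d. \<forall>k<d. lam j < lam k \<longrightarrow> \<pi> j < \<pi> k"
    and "\<pi> i = \<sigma>"
  shows "J_frechet \<alpha> d m lam i / phi_frechet \<alpha> d m lam i
           \<le> ((real (min \<sigma> m) + 1 / \<alpha>) / max (real \<sigma> - real m + 1) 1) powr (1 / \<alpha>)
       \<and> J_pareto \<alpha> d m lam i / phi_pareto \<alpha> d m lam i
           \<le> 2 * \<alpha> / (\<alpha> + 1) * ((real (min \<sigma> m) + 1 / \<alpha>) / real \<sigma>) powr (1 / \<alpha>)"
proof -
  note m = assms(1) and md = assms(2) and \<alpha> = assms(3) and iD = assms(5) and bij = assms(6)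
    and ord = assms(7) and \<sigma>def = assms(8)
  have a0: "\<alpha> > 0" using \<alpha> by simp
  define A where "A = {..<d} - {i}"
  define L where "L = {j. \<pi> j < \<sigma>}"
  have finA: "finite A" unfolding A_def by simp
  have \<sigma>: "1 \<le> \<sigma>" "\<sigma> \<le> d" using bij_betw_apply[OF bij, of i] iD \<sigma>def by auto
  have lamL: "lam j \<le> lam i" if "j \<in> A \<inter> L" for j
  proof (rule ccontr)
    assume "\<not> lam j \<le> lam i"
    then have "\<pi> i < \<pi> j" using ord that iD unfolding A_def by auto
    then show False using that \<sigma>def unfolding L_def by auto
  qed
  have nA: "card (A \<inter> L) = \<sigma> - 1"
  proof -
    have inj: "inj_on \<pi> (A \<inter> L)" using bij_betw_imp_inj_on[OF bij] unfolding A_def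
      by (rule inj_on_subset) auto
    have img: "\<pi> ` (A \<inter> L) = {1..<\<sigma>}"
    proof (rule set_eqI, rule iffI)
      fix b assume "b \<in> \<pi> ` (A \<inter> L)"
      then obtain j where j: "j \<in> A" "j \<in> L" "b = \<pi> j" by auto
      have "\<pi> j \<in> {1..d}" using bij_betw_apply[OF bij] j unfolding A_def by auto
      then show "b \<in> {1..<\<sigma>}" using j unfolding L_def by auto
    next
      fix b assume b: "b \<in> {1..<\<sigma>}"
      then have "b \<in> {1..d}" using \<sigma> by auto
      then obtain j where j: "j \<in> {..<d}" "\<pi> j = b" using bij unfolding bij_betw_def by (metis imageE)
      have "j \<noteq> i" using j b \<sigma>def by auto
      then show "b \<in> \<pi> ` (A \<inter> L)" using j b unfolding A_def L_def by auto
    qed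
    have "card (A \<inter> L) = card (\<pi> ` (A \<inter> L))" using card_image[OF inj] by simp
    then show ?thesis using img by simp
  qed
  define n where "n = card (A \<inter> L)"
  have sL_eq: "\<And>j x. j \<in> A \<inter> L \<Longrightarrow> x - lam i + lam j = x - (lam i - lam j)" by simp

  define CF where "CF = (if m \<le> n + 1 then real m / real (n + 2 - m) else real 1 / real (0 + 2 - 1))"
  have coreF: "(LINT x:{0<..}|lborel. PB A (\<lambda>j. frechet_cdf \<alpha> (x - lam i + lam j)) m * frechet_pdf \<alpha> x / x)
     \<le> CF powr (1/\<alpha>) * (LINT x:{0<..}|lborel. PB A (\<lambda>j. frechet_cdf \<alpha> (x - lam i + lam j)) m * frechet_pdf \<alpha> x)"
    unfolding CF_def
  proof (rule core[where CC="\<lambda>n' m'. real m' / real (n' + 2 - m')" and L=L])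
    show "1 < \<alpha>" by (rule \<alpha>)
    show "0 \<le> (0::real)" by simp
    show "\<And>x. x \<in> {0<..} \<Longrightarrow> 0 < frechet_cdf \<alpha> x \<and> frechet_cdf \<alpha> x \<le> 1"
      by (auto simp: frechet_cdf_def)
    show "ndec {0<..} (\<lambda>x. frechet_cdf \<alpha> x / x powr - \<alpha>)" by (rule frechet_m1[OF a0])
    show "ndec {0<..} (\<lambda>x. (1 - frechet_cdf \<alpha> x) / x powr - \<alpha>)" by (rule frechet_m3[OF a0])
    show "finite A" by (rule finA)
    show "\<forall>j\<in>A. ndec {0<..} (\<lambda>x. frechet_cdf \<alpha> (x - lam i + lam j)) \<and>
      (\<forall>x\<in>{0<..}. 0 \<le> frechet_cdf \<alpha> (x - lam i + lam j) \<and> frechet_cdf \<alpha> (x - lam i + lam j) \<le> 1)"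
      unfolding ndec_def using frechet_cdf_mono[OF a0] frechet_cdf_bounds by auto
    show "\<forall>j\<in>A \<inter> L. ndec {0<..} (\<lambda>x. frechet_cdf \<alpha> (x - lam i + lam j) / frechet_cdf \<alpha> x) \<and>
      (\<forall>x\<in>{0<..}. frechet_cdf \<alpha> (x - lam i + lam j) \<le> frechet_cdf \<alpha> x)"
    proof
      fix j assume j: "j \<in> A \<inter> L"
      have d0: "0 \<le> lam i - lam j" using lamL[OF j] by simp
      have "ndec {0<..} (\<lambda>x. frechet_cdf \<alpha> (x - (lam i - lam j)) / frechet_cdf \<alpha> x)"
        by (rule frechet_ratio_ndec[OF a0 d0])
      then have "ndec {0<..} (\<lambda>x. frechet_cdf \<alpha> (x - lam i + lam j) / frechet_cdf \<alpha> x)"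
        by (rule ndec_cong) (simp add: algebra_simps)
      moreover have "\<forall>x\<in>{0<..}. frechet_cdf \<alpha> (x - lam i + lam j) \<le> frechet_cdf \<alpha> x"
        using d0 by (auto intro!: frechet_cdf_mono[OF a0])
      ultimately show "ndec {0<..} (\<lambda>x. frechet_cdf \<alpha> (x - lam i + lam j) / frechet_cdf \<alpha> x) \<and>
        (\<forall>x\<in>{0<..}. frechet_cdf \<alpha> (x - lam i + lam j) \<le> frechet_cdf \<alpha> x)" by blast
    qed
    show "n = card (A \<inter> L)" by (simp add: n_def)
    show "1 \<le> m" by (rule m)
    show "\<And>n' m'. 1 \<le> m' \<Longrightarrow> m' \<le> n' + 1 \<Longrightarrow>
       0 < real m' / real (n' + 2 - m') \<and> (real m' / real (n' + 2 - m')) powr (- 1 / \<alpha>) \<in> {0<..} \<and>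
       set_integrable lborel {0<..} (\<lambda>x. (x powr - \<alpha> - real m' / real (n' + 2 - m')) * (frechet_pdf \<alpha> x * (frechet_cdf \<alpha> x ^ n' * (x powr - \<alpha> / frechet_cdf \<alpha> x) ^ (m' - 1)))) \<and>
       (LINT x:{0<..}|lborel. (x powr - \<alpha> - real m' / real (n' + 2 - m')) * (frechet_pdf \<alpha> x * (frechet_cdf \<alpha> x ^ n' * (x powr - \<alpha> / frechet_cdf \<alpha> x) ^ (m' - 1)))) = 0"
      by (rule frechet_wint[OF a0])
    show "set_integrable lborel {0<..} (frechet_pdf \<alpha>)" by (rule frechet_fint[OF a0])
    show "\<And>x. x \<in> {0<..} \<Longrightarrow> 0 \<le> frechet_pdf \<alpha> x" using a0 by (auto simp: frechet_pdf_def)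
    show "(\<lambda>x. PB A (\<lambda>j. frechet_cdf \<alpha> (x - lam i + lam j)) m * frechet_pdf \<alpha> x) \<in> borel_measurable lborel"
      by measurable
  qed
  have phiF: "phi_frechet \<alpha> d m lam i = (LINT x:{0<..}|lborel. PB A (\<lambda>j. frechet_cdf \<alpha> (x - lam i + lam j)) m * frechet_pdf \<alpha> x)"
    unfolding phi_frechet_def A_def by (rule phi_J_repr(1)[OF m]) measurable
  have JF: "J_frechet \<alpha> d m lam i = (LINT x:{0<..}|lborel. PB A (\<lambda>j. frechet_cdf \<alpha> (x - lam i + lam j)) m * frechet_pdf \<alpha> x / x)"
    unfolding J_frechet_def A_def by (rule phi_J_repr(2)[OF m]) measurable
  have phiF0: "0 \<le> phi_frechet \<alpha> d m lam i" unfolding phiF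
  proof (rule set_int_nonneg)
    fix x :: real assume "x \<in> {0<..}"
    then show "0 \<le> PB A (\<lambda>j. frechet_cdf \<alpha> (x - lam i + lam j)) m * frechet_pdf \<alpha> x"
      using PB_bounds[OF finA, of "\<lambda>j. frechet_cdf \<alpha> (x - lam i + lam j)" m] frechet_cdf_bounds a0
      by (auto simp: frechet_pdf_def)
  qed
  have CF0: "0 < CF" unfolding CF_def using m by auto
  have ratioF: "J_frechet \<alpha> d m lam i / phi_frechet \<alpha> d m lam i \<le> CF powr (1/\<alpha>)"
    using coreF phiF0 unfolding phiF JF by (intro ratio_le) auto
  have CFle: "CF \<le> (real (min \<sigma> m) + 1 / \<alpha>) / max (real \<sigma> - real m + 1) 1"
  proof (cases "m \<le> n + 1")
    case True
    then have "m \<le> \<sigma>" using nA \<sigma> unfolding n_def by simp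
    then have e1: "min \<sigma> m = m" "max (real \<sigma> - real m + 1) 1 = real \<sigma> - real m + 1" by auto
    have e2: "real (n + 2 - m) = real \<sigma> - real m + 1" using nA \<sigma> True unfolding n_def by auto
    have pos: "0 < real \<sigma> - real m + 1" using \<open>m \<le> \<sigma>\<close> by simp
    have "CF = real m / (real \<sigma> - real m + 1)" unfolding CF_def using True e2 by simp
    also have "\<dots> \<le> (real m + 1 / \<alpha>) / (real \<sigma> - real m + 1)"
      using pos a0 by (intro divide_right_mono) auto
    finally show ?thesis unfolding e1 .
  next
    case False
    then have "\<sigma> < m" using nA \<sigma> unfolding n_def by simp
    then have e1: "min \<sigma> m = \<sigma>" "max (real \<sigma> - real m + 1) 1 = 1" by auto
    have "0 \<le> 1 / \<alpha>" using a0 by simp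
    moreover have "1 \<le> real \<sigma>" using \<sigma> by simp
    ultimately have "1 \<le> real \<sigma> + 1 / \<alpha>" by linarith
    then show ?thesis unfolding CF_def using False e1 by simp
  qed
  have F: "J_frechet \<alpha> d m lam i / phi_frechet \<alpha> d m lam i
           \<le> ((real (min \<sigma> m) + 1 / \<alpha>) / max (real \<sigma> - real m + 1) 1) powr (1 / \<alpha>)"
  proof -
    have "CF powr (1/\<alpha>) \<le> ((real (min \<sigma> m) + 1 / \<alpha>) / max (real \<sigma> - real m + 1) 1) powr (1 / \<alpha>)"
      using CFle CF0 a0 by (intro powr_mono2) auto
    then show ?thesis using ratioF by linarith
  qed

  define CP where "CP = (if m \<le> n + 1 then real m / real (n + 2) else real 1 / real (0 + 2))"
  have coreP: "(LINT x:{1<..}|lborel. PB A (\<lambda>j. pareto_cdf \<alpha> (x - lam i + lam j)) m * pareto_pdf \<alpha> x / x)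
     \<le> CP powr (1/\<alpha>) * (LINT x:{1<..}|lborel. PB A (\<lambda>j. pareto_cdf \<alpha> (x - lam i + lam j)) m * pareto_pdf \<alpha> x)"
    unfolding CP_def
  proof (rule core[where CC="\<lambda>n' m'. real m' / real (n' + 2)" and L=L])
    show "1 < \<alpha>" by (rule \<alpha>)
    show "0 \<le> (1::real)" by simp
    show "\<And>x. x \<in> {1<..} \<Longrightarrow> 0 < pareto_cdf \<alpha> x \<and> pareto_cdf \<alpha> x \<le> 1"
      using pareto_cdf_gt0[OF a0] pareto_cdf_bounds[OF a0] by auto
    show "ndec {1<..} (\<lambda>x. pareto_cdf \<alpha> x / x powr - \<alpha>)" by (rule pareto_m1[OF a0])
    show "ndec {1<..} (\<lambda>x. (1 - pareto_cdf \<alpha> x) / x powr - \<alpha>)" by (rule pareto_m3[OF a0])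
    show "finite A" by (rule finA)
    show "\<forall>j\<in>A. ndec {1<..} (\<lambda>x. pareto_cdf \<alpha> (x - lam i + lam j)) \<and>
      (\<forall>x\<in>{1<..}. 0 \<le> pareto_cdf \<alpha> (x - lam i + lam j) \<and> pareto_cdf \<alpha> (x - lam i + lam j) \<le> 1)"
      unfolding ndec_def using pareto_cdf_mono[OF a0] pareto_cdf_bounds[OF a0] by auto
    show "\<forall>j\<in>A \<inter> L. ndec {1<..} (\<lambda>x. pareto_cdf \<alpha> (x - lam i + lam j) / pareto_cdf \<alpha> x) \<and>
      (\<forall>x\<in>{1<..}. pareto_cdf \<alpha> (x - lam i + lam j) \<le> pareto_cdf \<alpha> x)"
    proof
      fix j assume j: "j \<in> A \<inter> L"
      have d0: "0 \<le> lam i - lam j" using lamL[OF j] by simp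
      have "ndec {1<..} (\<lambda>x. pareto_cdf \<alpha> (x - (lam i - lam j)) / pareto_cdf \<alpha> x)"
        by (rule pareto_ratio_ndec[OF a0 d0])
      then have "ndec {1<..} (\<lambda>x. pareto_cdf \<alpha> (x - lam i + lam j) / pareto_cdf \<alpha> x)"
        by (rule ndec_cong) (simp add: algebra_simps)
      moreover have "\<forall>x\<in>{1<..}. pareto_cdf \<alpha> (x - lam i + lam j) \<le> pareto_cdf \<alpha> x"
        using d0 by (auto intro!: pareto_cdf_mono[OF a0])
      ultimately show "ndec {1<..} (\<lambda>x. pareto_cdf \<alpha> (x - lam i + lam j) / pareto_cdf \<alpha> x) \<and>
        (\<forall>x\<in>{1<..}. pareto_cdf \<alpha> (x - lam i + lam j) \<le> pareto_cdf \<alpha> x)" by blast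
    qed
    show "n = card (A \<inter> L)" by (simp add: n_def)
    show "1 \<le> m" by (rule m)
    show "\<And>n' m'. 1 \<le> m' \<Longrightarrow> m' \<le> n' + 1 \<Longrightarrow>
       0 < real m' / real (n' + 2) \<and> (real m' / real (n' + 2)) powr (- 1 / \<alpha>) \<in> {1<..} \<and>
       set_integrable lborel {1<..} (\<lambda>x. (x powr - \<alpha> - real m' / real (n' + 2)) * (pareto_pdf \<alpha> x * (pareto_cdf \<alpha> x ^ n' * (x powr - \<alpha> / pareto_cdf \<alpha> x) ^ (m' - 1)))) \<and>
       (LINT x:{1<..}|lborel. (x powr - \<alpha> - real m' / real (n' + 2)) * (pareto_pdf \<alpha> x * (pareto_cdf \<alpha> x ^ n' * (x powr - \<alpha> / pareto_cdf \<alpha> x) ^ (m' - 1)))) = 0"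
      by (rule pareto_wint[OF a0])
    show "set_integrable lborel {1<..} (pareto_pdf \<alpha>)" by (rule pareto_fint[OF a0])
    show "\<And>x. x \<in> {1<..} \<Longrightarrow> 0 \<le> pareto_pdf \<alpha> x" using a0 by (auto simp: pareto_pdf_def)
    show "(\<lambda>x. PB A (\<lambda>j. pareto_cdf \<alpha> (x - lam i + lam j)) m * pareto_pdf \<alpha> x) \<in> borel_measurable lborel"
      by measurable
  qed
  have phiP: "phi_pareto \<alpha> d m lam i = (LINT x:{1<..}|lborel. PB A (\<lambda>j. pareto_cdf \<alpha> (x - lam i + lam j)) m * pareto_pdf \<alpha> x)"
    unfolding phi_pareto_def A_def by (rule phi_J_repr(1)[OF m]) measurable
  have JP: "J_pareto \<alpha> d m lam i = (LINT x:{1<..}|lborel. PB A (\<lambda>j. pareto_cdf \<alpha> (x - lam i + lam j)) m * pareto_pdf \<alpha> x / x)"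
    unfolding J_pareto_def A_def by (rule phi_J_repr(2)[OF m]) measurable
  have phiP0: "0 \<le> phi_pareto \<alpha> d m lam i" unfolding phiP
  proof (rule set_int_nonneg)
    fix x :: real assume "x \<in> {1<..}"
    then show "0 \<le> PB A (\<lambda>j. pareto_cdf \<alpha> (x - lam i + lam j)) m * pareto_pdf \<alpha> x"
      using PB_bounds[OF finA, of "\<lambda>j. pareto_cdf \<alpha> (x - lam i + lam j)" m] pareto_cdf_bounds[OF a0] a0
      by (auto simp: pareto_pdf_def)
  qed
  have CP0: "0 < CP" unfolding CP_def using m by auto
  have ratioP: "J_pareto \<alpha> d m lam i / phi_pareto \<alpha> d m lam i \<le> CP powr (1/\<alpha>)"
    using coreP phiP0 unfolding phiP JP by (intro ratio_le) auto
  have CPle: "CP \<le> (real (min \<sigma> m) + 1 / \<alpha>) / real \<sigma>"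
  proof (cases "m \<le> n + 1")
    case True
    then have "m \<le> \<sigma>" using nA \<sigma> unfolding n_def by simp
    then have e1: "min \<sigma> m = m" by auto
    have e2: "real (n + 2) = real \<sigma> + 1" using nA \<sigma> unfolding n_def by auto
    have "real m / (real \<sigma> + 1) \<le> real m / real \<sigma>" using \<sigma> by (intro divide_left_mono) auto
    also have "\<dots> \<le> (real m + 1 / \<alpha>) / real \<sigma>" using \<sigma> a0 by (intro divide_right_mono) auto
    finally have "real m / (real \<sigma> + 1) \<le> (real m + 1 / \<alpha>) / real \<sigma>" .
    moreover have "CP = real m / (real \<sigma> + 1)" unfolding CP_def using True e2 by simp
    ultimately show ?thesis unfolding e1 by simp
  next
    case False
    then have "\<sigma> < m" using nA \<sigma> unfolding n_def by simp
    then have e1: "min \<sigma> m = \<sigma>" by auto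
    have h: "1 \<le> (real \<sigma> + 1 / \<alpha>) / real \<sigma>" using \<sigma> a0 by simp
    have "CP = 1 / 2" unfolding CP_def using False by simp
    then show ?thesis unfolding e1 using h by linarith
  qed
  have P: "J_pareto \<alpha> d m lam i / phi_pareto \<alpha> d m lam i
           \<le> 2 * \<alpha> / (\<alpha> + 1) * ((real (min \<sigma> m) + 1 / \<alpha>) / real \<sigma>) powr (1 / \<alpha>)"
  proof -
    have "CP powr (1/\<alpha>) \<le> ((real (min \<sigma> m) + 1 / \<alpha>) / real \<sigma>) powr (1 / \<alpha>)"
      using CPle CP0 a0 by (intro powr_mono2) auto
    also have "\<dots> \<le> 2 * \<alpha> / (\<alpha> + 1) * ((real (min \<sigma> m) + 1 / \<alpha>) / real \<sigma>) powr (1 / \<alpha>)"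
    proof -
      have c1: "1 \<le> 2 * \<alpha> / (\<alpha> + 1)" using \<alpha> by simp
      have X0: "0 \<le> ((real (min \<sigma> m) + 1 / \<alpha>) / real \<sigma>) powr (1 / \<alpha>)" by simp
      have "1 * ((real (min \<sigma> m) + 1 / \<alpha>) / real \<sigma>) powr (1 / \<alpha>) \<le> 2 * \<alpha> / (\<alpha> + 1) * ((real (min \<sigma> m) + 1 / \<alpha>) / real \<sigma>) powr (1 / \<alpha>)"
        by (rule mult_right_mono[OF c1 X0])
      then show ?thesis by simp
    qed
    finally show ?thesis using ratioP by linarith
  qed
  show ?thesis using F P by blast
qed

end
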